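(* Let $q$ be a power of an odd prime, $d\ge2$, $E\subset\mathbb F_q^d$, and for $t\in\mathbb F_q$ let $w(t)=\#\{(x,y)\in E\times E:\|x-y\|_Q=t\}$. Then: (i) if $d$ is even and $\eta(\varepsilon)=1$, $0\le w(0)\le \frac{|E|^2}{q}+q^{3d/2}\sum_{m\in(S_{Q^*})_0}|\widehat E(m)|^2$; (ii) if $d$ is even and $\eta(\varepsilon)=-1$, $0\le w(0)\le\frac{|E|^2}{q}+q^{(d-2)/2}|E|$; (iii) if $d$ is odd, $0\le w(0)\le\frac{|E|^2}{q}+q^{(d-1)/2}|E|$.
   Context: $\eta$ is the quadratic character of $\mathbb F_q^*$. Fix a symmetric $d\times d$ matrix $A$ over $\mathbb F_q$ with $\det A\ne0$. If $d$ is even: $\|x\|_Q=x_1^2-x_2^2+\dots+x_{d-1}^2-\varepsilon x_d^2$, $\|m\|_{Q^*}=m_1^2-m_2^2+\dots+m_{d-1}^2-\varepsilon^{-1}m_d^2$, with $\varepsilon\in\mathbb F_q^*$ such that $\eta((-1)^{d/2}\varepsilon)=\eta(\det A)$. If $d$ is odd: $\|x\|_Q=x_1^2-x_2^2+\dots-x_{d-1}^2+\varepsilon x_d^2$, $\|m\|_{Q^*}=m_1^2-m_2^2+\dots-m_{d-1}^2+\varepsilon^{-1}m_d^2$, with $\eta((-1)^{(d-1)/2}\varepsilon)=\eta(\det A)$. $(S_{Q^*})_0=\{m\in\mathbb F_q^d:\|m\|_{Q^*}=0\}$. $\widehat E(m)=q^{-d}\sum_{x\in E}\chi(-m\cdot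 x)$ with $\chi$ the canonical additive character of $\mathbb F_q$ ($\chi(c)=e^{2\pi i\,\mathrm{Tr}(c)/p}$). *)

theory Defs
  imports Complex_Main "HOL-Library.Cardinality" "Jordan_Normal_Form.Determinant"
begin

text \<open>Finite field F_q: a type of class field and finite; q = CARD('a), p = CHAR('a).
  Vectors of F_q^d: functions nat => 'a supported on {..<d}.\<close>

definition vecs :: "nat \<Rightarrow> (nat \<Rightarrow> 'a) set" where
  "vecs d = PiE {..<d} (\<lambda>_. UNIV)"

definition ff_trace :: "'a::{field,finite} \<Rightarrow> 'a" where
  "ff_trace c = (\<Sum>j < (THE n. CHAR('a) ^ n = CARD('a)). c ^ (CHAR('a) ^ j))"

definition add_char :: "'a::{field,finite} \<Rightarrow> complex" where
  "add_char c = cis (2 * pi * real (THE k. k < CHAR('a) \<and> of_nat k = ff_trace c) / real CHAR('a))"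

definition qchar :: "'a::{field,finite} \<Rightarrow> int" where
  "qchar a = (if a = 0 then 0 else if (\<exists>b. b ^ 2 = a) then 1 else -1)"

text \<open>x_1^2 - x_2^2 + ... (+/-) x_{d-1}^2 + c x_d^2 with c = -e (d even), c = e (d odd);
  0-based indices.\<close>
definition qform :: "nat \<Rightarrow> 'a::field \<Rightarrow> (nat \<Rightarrow> 'a) \<Rightarrow> 'a" where
  "qform d e x = (\<Sum>i < d - 1. (-1) ^ i * x i ^ 2) + (if even d then - e else e) * x (d - 1) ^ 2"

definition normQ :: "nat \<Rightarrow> 'a::field \<Rightarrow> (nat \<Rightarrow> 'a) \<Rightarrow> 'a" where
  "normQ d e x = qform d e x"

definition normQdual :: "nat \<Rightarrow> 'a::field \<Rightarrow> (nat \<Rightarrow> 'a) \<Rightarrow> 'a" where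
  "normQdual d e m = qform d (inverse e) m"

definition dotp :: "nat \<Rightarrow> (nat \<Rightarrow> 'a::field) \<Rightarrow> (nat \<Rightarrow> 'a) \<Rightarrow> 'a" where
  "dotp d m x = (\<Sum>i < d. m i * x i)"

definition fourier :: "nat \<Rightarrow> (nat \<Rightarrow> 'a::{field,finite}) set \<Rightarrow> (nat \<Rightarrow> 'a) \<Rightarrow> complex" where
  "fourier d E m = (1 / of_nat (CARD('a) ^ d)) * (\<Sum>x\<in>E. add_char (- dotp d m x))"

definition wcount :: "nat \<Rightarrow> 'a::{field,finite} \<Rightarrow> (nat \<Rightarrow> 'a) set \<Rightarrow> 'a \<Rightarrow> nat" where
  "wcount d e E t = card {(x, y). x \<in> E \<and> y \<in> E \<and> normQ d e (\<lambda>i. x i - y i) = t}"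

definition SQdual0 :: "nat \<Rightarrow> 'a::{field,finite} \<Rightarrow> (nat \<Rightarrow> 'a) set" where
  "SQdual0 d e = {m \<in> vecs d. normQdual d e m = 0}"

end

theory Submission
  imports Defs "HOL-Algebra.Sylow" "HOL-Algebra.Multiplicative_Group"
    "HOL-Computational_Algebra.Polynomial" "HOL-Computational_Algebra.Primes" "HOL-Number_Theory.Cong"
begin

lemma ff_prime_CHAR: "prime CHAR('a::{field,finite})"
  by (rule prime_CHAR_semidom) (simp add: finite_imp_CHAR_pos)

lemma ff_power_card: "(x::'a::{field,finite}) ^ CARD('a) = x"
proof (cases "x = 0")
  case False
  have "x * (\<Prod>y\<in>UNIV-{0}. x * y) = x * x ^ (card (UNIV :: 'a set) - 1) * \<Prod>(UNIV-{0})"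
    by (simp add: prod.distrib mult_ac)
  also have "x * x ^ (card (UNIV :: 'a set) - 1) = x ^ Suc (card (UNIV :: 'a set) - 1)"
    by (subst power_Suc) auto
  also have "Suc (card (UNIV :: 'a set) - 1) = card (UNIV :: 'a set)"
    using finite_UNIV_card_ge_0[where ?'a = 'a] by simp
  also have "(\<Prod>y\<in>UNIV-{0}. x * y) = (\<Prod>y\<in>UNIV-{0}. y)"
    by (rule prod.reindex_bij_witness[of _ "\<lambda>y. y / x" "\<lambda>y. x * y"]) (use False in auto)
  finally show ?thesis
    by simp
qed (use finite_UNIV_card_ge_0[where ?'a = 'a] in auto)

lemma ff_of_nat_mult_pow:
  "(x::'a::field) [^]\<^bsub>\<lparr>carrier = UNIV, monoid.mult = (+), one = (0::'a)\<rparr>\<^esub> (k::nat) = of_nat k * x"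
  by (induction k) (auto simp: algebra_simps)

lemma ff_prime_dvd_card:
  assumes r: "prime r" "r dvd CARD('a::{field,finite})"
  shows "r = CHAR('a)"
proof -
  define G where "G = \<lparr> carrier = (UNIV :: 'a set), monoid.mult = (+), one = (0 :: 'a) \<rparr>"
  have grp: "group G"
  proof (rule groupI)
    fix x assume x: "x \<in> carrier G"
    show "\<exists>y\<in>carrier G. y \<otimes>\<^bsub>G\<^esub> x = \<one>\<^bsub>G\<^esub>"
      by (intro bexI[of _ "-x"]) (auto simp: G_def)
  qed (auto simp: G_def add_ac)
  have ord: "order G = r ^ 1 * (CARD('a) div r)"
    using r by (simp add: G_def order_def)
  obtain H where H: "subgroup H G" "card H = r"
    using sylow_thm[OF r(1) grp ord] by (auto simp: G_def)
  have "card H > 1" using H r prime_gt_1_nat by auto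
  have "\<not> H \<subseteq> {0}"
  proof
    assume "H \<subseteq> {0}"
    hence "card H \<le> card {0::'a}" by (intro card_mono) auto
    with \<open>card H > 1\<close> show False by simp
  qed
  then obtain x where x: "x \<in> H" "x \<noteq> 0" by blast
  interpret HG: group "G\<lparr>carrier := H\<rparr>"
    using subgroup.subgroup_is_group[OF H(1) grp] .
  have "x [^]\<^bsub>G\<lparr>carrier := H\<rparr>\<^esub> order (G\<lparr>carrier := H\<rparr>) = \<one>\<^bsub>G\<lparr>carrier := H\<rparr>\<^esub>"
    by (rule HG.pow_order_eq_1) (use x in simp)
  moreover have "x [^]\<^bsub>G\<lparr>carrier := H\<rparr>\<^esub> order (G\<lparr>carrier := H\<rparr>) = x [^]\<^bsub>G\<^esub> r"
    using H by (simp add: order_def monoid.nat_pow_consistent[symmetric] group.is_monoid[OF grp])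
  ultimately have "of_nat r * x = 0"
    using ff_of_nat_mult_pow[of x r] by (simp add: G_def)
  with x have "of_nat r = (0::'a)" by simp
  hence "CHAR('a) dvd r" by (simp add: of_nat_eq_0_iff_char_dvd)
  thus ?thesis using r ff_prime_CHAR[where 'a='a]
    by (metis primes_dvd_imp_eq)
qed

lemma ff_card_prime_power: "\<exists>n. CARD('a::{field,finite}) = CHAR('a) ^ n"
proof -
  have pos: "CARD('a) > 0" by simp
  have "prime_factors CARD('a) \<subseteq> {CHAR('a)}"
    using ff_prime_dvd_card[where 'a='a] by (auto simp: in_prime_factors_iff)
  hence "CARD('a) = (\<Prod>p\<in>prime_factors CARD('a). p ^ multiplicity p CARD('a))"
    using prime_factorization_nat[OF pos] by simp
  also have "\<dots> = (\<Prod>p\<in>{CHAR('a)}. p ^ multiplicity p CARD('a))"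
    using \<open>prime_factors CARD('a) \<subseteq> {CHAR('a)}\<close>
    by (intro prod.mono_neutral_left)
       (auto simp: in_prime_factors_iff not_dvd_imp_multiplicity_0 ff_prime_CHAR)
  finally show ?thesis by auto
qed


abbreviation "ffn TYPE('a::{field,finite}) \<equiv> (THE n. CHAR('a) ^ n = CARD('a))"

lemma ff_deg: "CHAR('a::{field,finite}) ^ ffn TYPE('a) = CARD('a)"
proof -
  obtain n where n: "CARD('a) = CHAR('a) ^ n" using ff_card_prime_power by blast
  have p1: "CHAR('a) > 1" using ff_prime_CHAR[where 'a='a] prime_gt_1_nat by blast
  have "\<exists>!n. CHAR('a) ^ n = CARD('a)"
    using n p1 by (auto intro!: ex1I[of _ n])
  thus ?thesis by (rule theI')
qed

lemma ff_deg_pos: "ffn TYPE('a::{field,finite}) > 0"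
proof (rule ccontr)
  assume "\<not> ffn TYPE('a) > 0"
  hence "CARD('a) = 1" using ff_deg[where 'a='a] by simp
  moreover have "CARD('a) \<ge> 2"
    using card_mono[of "UNIV::'a set" "{0,1}"] by simp
  ultimately show False by simp
qed

lemma ff_trace_add: "ff_trace (a + b) = ff_trace a + ff_trace (b::'a::{field,finite})"
  unfolding ff_trace_def
  by (simp add: sum.distrib freshmans_dream'[OF ff_prime_CHAR])

lemma ff_trace_pow: "ff_trace (c::'a::{field,finite}) ^ CHAR('a) = ff_trace c"
proof -
  let ?p = "CHAR('a)" and ?n = "ffn TYPE('a)"
  have "ff_trace c ^ ?p = (\<Sum>j<?n. (c ^ (?p ^ j)) ^ ?p)"
    unfolding ff_trace_def by (rule freshmans_dream_sum[OF ff_prime_CHAR refl])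
  also have "\<dots> = (\<Sum>j<?n. c ^ (?p ^ Suc j))"
    by (simp add: power_mult[symmetric] mult.commute)
  also have "\<dots> = (\<Sum>j<Suc ?n. c ^ (?p ^ j)) - c"
    by (subst sum.lessThan_Suc_shift) simp
  also have "\<dots> = ff_trace c"
    by (simp add: ff_trace_def ff_deg ff_power_card)
  finally show ?thesis .
qed

lemma ff_of_nat_pow_char: "(of_nat k :: 'a::{field,finite}) ^ CHAR('a) = of_nat k"
proof (induction k)
  case (Suc k)
  then show ?case
    by (simp add: freshmans_dream[OF ff_prime_CHAR refl])
qed (simp add: ff_prime_CHAR prime_gt_0_nat)

lemma ff_prime_field:
  assumes "(y::'a::{field,finite}) ^ CHAR('a) = y"
  shows "\<exists>k < CHAR('a). y = of_nat k"
proof -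
  let ?p = "CHAR('a)"
  have p2: "?p \<ge> 2" using ff_prime_CHAR[where 'a='a] prime_ge_2_nat by blast
  define P :: "'a poly" where "P = Polynomial.monom 1 ?p - [:0, 1:]"
  have coeffP: "Polynomial.coeff P ?p = 1" using p2 by (simp add: P_def coeff_pCons split: nat.split)
  hence P0: "P \<noteq> 0" by auto
  have degP: "degree P \<le> ?p"
    by (rule degree_le) (use p2 in \<open>auto simp: P_def coeff_pCons split: nat.split\<close>)
  have polyP: "poly P x = x ^ ?p - x" for x by (simp add: P_def poly_monom)
  have sub: "of_nat ` {..<?p} \<subseteq> {x. poly P x = (0::'a)}"
    by (auto simp: polyP ff_of_nat_pow_char)
  have cardS: "card (of_nat ` {..<?p} :: 'a set) = ?p"
    by (subst card_image) (auto intro!: inj_onI simp: of_nat_eq_iff_cong_CHAR cong_def)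
  have "card {x. poly P x = (0::'a)} \<le> ?p"
    using card_poly_roots_bound[OF P0] degP by simp
  hence eq: "of_nat ` {..<?p} = {x. poly P x = (0::'a)}"
    using sub cardS card_mono[OF _ sub] by (intro card_subset_eq) auto
  have "y \<in> {x. poly P x = 0}" using assms by (simp add: polyP)
  with eq have "y \<in> of_nat ` {..<?p}" by simp
  thus ?thesis by auto
qed

lemma ff_trace_nontriv: "\<exists>c::'a::{field,finite}. ff_trace c \<noteq> 0"
proof (rule ccontr)
  assume "\<not> (\<exists>c::'a. ff_trace c \<noteq> 0)"
  hence all0: "\<And>c::'a. ff_trace c = 0" by blast
  let ?p = "CHAR('a)" and ?n = "ffn TYPE('a)"
  have p2: "?p \<ge> 2" using ff_prime_CHAR[where 'a='a] prime_ge_2_nat by blast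
  define P :: "'a poly" where "P = (\<Sum>j<?n. Polynomial.monom 1 (?p ^ j))"
  have inj: "?p ^ i = ?p ^ j \<longleftrightarrow> i = j" for i j using p2 by (simp add: power_inject_exp)
  have coeffP: "Polynomial.coeff P i = (\<Sum>j<?n. if ?p ^ j = i then 1 else 0)" for i
    by (simp add: P_def Polynomial.coeff_sum Polynomial.coeff_monom)
  have "Polynomial.coeff P (?p ^ (?n - 1)) = 1"
  proof -
    have "(\<Sum>j<?n. if ?p ^ j = ?p ^ (?n - 1) then 1 else 0) = (\<Sum>j\<in>{?n - 1}. (1::'a))"
      using ff_deg_pos[where 'a='a] inj by (intro sum.mono_neutral_cong_right) auto
    thus ?thesis by (simp add: coeffP)
  qed
  hence P0: "P \<noteq> 0" by auto
  have degP: "degree P \<le> ?p ^ (?n - 1)"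
  proof (rule degree_le, intro allI impI)
    fix i assume i: "?p ^ (?n - 1) < i"
    have "?p ^ j \<noteq> i" if "j < ?n" for j
    proof -
      have "?p ^ j \<le> ?p ^ (?n - 1)" using that p2 by (intro power_increasing) auto
      thus ?thesis using i by auto
    qed
    thus "Polynomial.coeff P i = 0" by (simp add: coeffP)
  qed
  have "poly P c = ff_trace c" for c by (simp add: P_def poly_sum poly_monom ff_trace_def)
  hence "{x. poly P x = 0} = UNIV" using all0 by auto
  hence "CARD('a) \<le> ?p ^ (?n - 1)" using card_poly_roots_bound[OF P0] degP by simp
  moreover have "?p ^ (?n - 1) < ?p ^ ?n" using p2 ff_deg_pos[where 'a='a]
    by (intro power_strict_increasing) auto
  ultimately show False using ff_deg[where 'a='a] by simp
qed


definition trk :: "'a::{field,finite} \<Rightarrow> nat" where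
  "trk c = (THE k. k < CHAR('a) \<and> of_nat k = ff_trace c)"

lemma trk: "trk c < CHAR('a) \<and> of_nat (trk c) = ff_trace (c::'a::{field,finite})"
proof -
  obtain k where k: "k < CHAR('a)" "ff_trace c = of_nat k"
    using ff_prime_field[OF ff_trace_pow[of c]] by blast
  have "\<exists>!k. k < CHAR('a) \<and> of_nat k = ff_trace c"
  proof (rule ex1I[of _ k])
    fix k' assume "k' < CHAR('a) \<and> of_nat k' = ff_trace c"
    with k show "k' = k"
      by (auto simp: of_nat_eq_iff_cong_CHAR cong_def)
  qed (use k in auto)
  thus ?thesis unfolding trk_def by (rule theI')
qed

lemma add_char_trk: "add_char (c::'a::{field,finite}) = cis (2 * pi * real (trk c) / real CHAR('a))"
  by (simp add: add_char_def trk_def)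

lemma add_char_add: "add_char (a + b) = add_char a * add_char (b::'a::{field,finite})"
proof -
  let ?p = "CHAR('a)"
  have p0: "?p > 0" using ff_prime_CHAR[where 'a='a] prime_gt_0_nat by blast
  have "of_nat (trk (a+b)) = (of_nat (trk a + trk b) :: 'a)"
    using trk[of "a+b"] trk[of a] trk[of b] by (simp add: ff_trace_add)
  hence "[trk (a+b) = trk a + trk b] (mod ?p)"
    by (simp only: of_nat_eq_iff_cong_CHAR)
  hence "trk (a+b) = (trk a + trk b) mod ?p"
    using trk[of "a+b"] by (auto simp: cong_def)
  hence eq: "trk a + trk b = trk (a+b) + ?p * ((trk a + trk b) div ?p)"
    by simp
  have "add_char a * add_char b = cis (2 * pi * real (trk a + trk b) / real ?p)"
    by (simp add: add_char_trk cis_mult add_divide_distrib distrib_left)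
  also have "\<dots> = cis (2 * pi * real (trk (a+b)) / real ?p + 2 * pi * real ((trk a + trk b) div ?p))"
    by (subst eq) (use p0 in \<open>simp add: add_divide_distrib distrib_left mult.assoc\<close>)
  also have "\<dots> = cis (2 * pi * real (trk (a+b)) / real ?p)"
    by (simp add: cis_mult[symmetric] cis_multiple_2pi)
  finally show ?thesis by (simp add: add_char_trk)
qed

lemma add_char_norm [simp]: "cmod (add_char (c::'a::{field,finite})) = 1"
  by (simp add: add_char_def)

lemma add_char_0 [simp]: "add_char (0::'a::{field,finite}) = 1"
proof -
  have "add_char (0::'a) = 0 \<or> add_char (0::'a) = 1" using add_char_add[of "0::'a" 0] by simp
  moreover have "add_char (0::'a) \<noteq> 0" using add_char_norm[of "0::'a"] by (metis norm_zero zero_neq_one)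
  ultimately show ?thesis by blast
qed

lemma add_char_neg: "add_char (- c) = cnj (add_char (c::'a::{field,finite}))"
proof -
  have "add_char (-c) * add_char c = 1" using add_char_add[of "-c" c] by simp
  moreover have "cnj (add_char c) * add_char c = 1"
    using add_char_norm[of c] by (metis complex_norm_square mult.commute of_real_1 power_one)
  moreover have "add_char c \<noteq> 0" using add_char_norm[of c] by (metis norm_zero zero_neq_one)
  ultimately show ?thesis by (metis mult_cancel_right)
qed

lemma add_char_diff: "add_char (a - b) = add_char a * cnj (add_char (b::'a::{field,finite}))"
  using add_char_add[of a "-b"] by (simp add: add_char_neg)

lemma add_char_nontriv: "\<exists>c::'a::{field,finite}. add_char c \<noteq> 1"
proof -
  obtain c :: 'a where c: "ff_trace c \<noteq> 0" using ff_trace_nontriv by blast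
  let ?p = "CHAR('a)" and ?k = "trk c"
  have k: "?k < ?p" "?k \<noteq> 0" using trk[of c] c by (metis of_nat_0)+
  have "add_char c \<noteq> 1"
  proof
    assume "add_char c = 1"
    hence "cos (2 * pi * real ?k / real ?p) = 1"
      by (simp add: add_char_trk cis.code complex_eq_iff)
    then obtain m :: int where m: "2 * pi * real ?k / real ?p = real_of_int m * 2 * pi"
      by (auto simp: cos_one_2pi_int)
    have "real ?k / real ?p = (2 * pi * real ?k / real ?p) / (2 * pi)" by simp
    also have "\<dots> = real_of_int m" using m by simp
    finally have "real ?k / real ?p = real_of_int m" .
    moreover have "0 < real ?k / real ?p" "real ?k / real ?p < 1" using k by auto
    ultimately have "0 < m" "m < 1" by simp_all
    thus False by simp
  qed
  thus ?thesis by blast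
qed

lemma add_char_sum: "(\<Sum>t\<in>UNIV. add_char (a * t)) = (if a = 0 then of_nat CARD('a) else (0::complex))"
  for a :: "'a::{field,finite}"
proof (cases "a = 0")
  case False
  obtain c :: 'a where c: "add_char c \<noteq> 1" using add_char_nontriv by blast
  have e1: "(\<Sum>t\<in>UNIV. add_char (a * t)) = (\<Sum>t\<in>UNIV. add_char (t::'a))"
    using False by (intro sum.reindex_bij_witness[where i="\<lambda>t. t / a" and j="\<lambda>t. a * t"]) auto
  have "(\<Sum>t\<in>UNIV. add_char (t::'a)) = (\<Sum>t\<in>UNIV. add_char (t + c))"
    by (rule sum.reindex_bij_witness[of _ "\<lambda>t. t + c" "\<lambda>t. t - c"]) auto
  also have "\<dots> = add_char c * (\<Sum>t\<in>UNIV. add_char (t::'a))"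
    by (simp add: add_char_add sum_distrib_left mult.commute)
  finally have "(1 - add_char c) * (\<Sum>t\<in>UNIV. add_char (t::'a)) = 0"
    by (simp add: algebra_simps)
  with c e1 False show ?thesis by simp
qed simp

lemma two_nz: assumes "CHAR('a::{field,finite}) \<noteq> 2" shows "(2::'a) \<noteq> 0"
proof
  assume "(2::'a) = 0"
  hence "(of_nat 2::'a) = 0" by simp
  hence "CHAR('a) dvd 2" by (simp only: of_nat_eq_0_iff_char_dvd)
  hence "CHAR('a) = 2" using ff_prime_CHAR[where 'a='a] primes_dvd_imp_eq two_is_prime_nat by blast
  with assms show False by simp
qed

lemma sq_count:
  assumes "CHAR('a::{field,finite}) \<noteq> 2"
  shows "int (card {x::'a. x^2 = t}) = 1 + qchar t"
proof (cases "t = 0")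
  case True
  hence "{x::'a. x^2 = t} = {0}" by auto
  thus ?thesis using True by (simp add: qchar_def)
next
  case False
  show ?thesis
  proof (cases "\<exists>b. b^2 = t")
    case True
    then obtain b where b: "b^2 = t" by blast
    with False have b0: "b \<noteq> 0" by auto
    have "b \<noteq> -b"
    proof
      assume "b = -b"
      hence "2 * b = 0" by (simp add: algebra_simps)
      with b0 two_nz[OF assms] show False by simp
    qed
    have "{x::'a. x^2 = t} = {b, -b}"
    proof -
      have "x^2 = b^2 \<longleftrightarrow> x = b \<or> x = -b" for x :: 'a
      proof -
        have "x^2 - b^2 = (x - b) * (x + b)" by (simp add: power2_eq_square algebra_simps)
        thus ?thesis by (metis add_eq_0_iff2 eq_iff_diff_eq_0 mult_eq_0_iff)
      qed
      thus ?thesis using b by auto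
    qed
    thus ?thesis using \<open>b \<noteq> -b\<close> True False by (simp add: qchar_def)
  next
    case nsq: False
    hence "{x::'a. x^2 = t} = {}" by auto
    thus ?thesis using nsq False by (simp add: qchar_def)
  qed
qed

lemma qchar_sum0:
  assumes "CHAR('a::{field,finite}) \<noteq> 2"
  shows "(\<Sum>t\<in>UNIV. qchar (t::'a)) = 0"
proof -
  have "(\<Sum>t\<in>UNIV. int (card {x::'a. x^2 = t})) = int (card (UNIV::'a set))"
  proof -
    have "(\<Sum>t\<in>UNIV. card {x::'a. x^2 = t}) = (\<Sum>t\<in>UNIV. \<Sum>x\<in>{x::'a\<in>UNIV. x^2 = t}. (1::nat))"
      by simp
    also have "\<dots> = (\<Sum>x\<in>(UNIV::'a set). 1)" by (rule sum.group) auto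
    finally show ?thesis by (simp flip: of_nat_sum)
  qed
  hence "(\<Sum>t\<in>UNIV. 1 + qchar (t::'a)) = int CARD('a)"
    using sq_count[OF assms] by simp
  thus ?thesis by (simp add: sum.distrib)
qed

definition sqs :: "'a::{field,finite} set" where "sqs = {t. t \<noteq> 0 \<and> (\<exists>b. b^2 = t)}"
definition nsqs :: "'a::{field,finite} set" where "nsqs = {t. t \<noteq> 0 \<and> \<not>(\<exists>b. b^2 = t)}"

lemma card_sqs_nsqs:
  assumes "CHAR('a::{field,finite}) \<noteq> 2"
  shows "card (sqs::'a set) = card (nsqs::'a set)"
proof -
  have "(\<Sum>t\<in>UNIV. qchar (t::'a)) = (\<Sum>t\<in>(sqs::'a set). qchar t) + (\<Sum>t\<in>(nsqs::'a set). qchar t) + (\<Sum>t\<in>{0::'a}. qchar t)"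
  proof -
    have U: "(UNIV::'a set) = insert 0 (sqs \<union> nsqs)" by (auto simp: sqs_def nsqs_def)
    have h1: "sum qchar (insert 0 ((sqs::'a set) \<union> nsqs)) = qchar (0::'a) + sum qchar ((sqs::'a set) \<union> nsqs)"
      by (subst sum.insert) (auto simp: sqs_def nsqs_def)
    have h2: "sum qchar ((sqs::'a set) \<union> nsqs) = sum qchar (sqs::'a set) + sum qchar (nsqs::'a set)"
      by (rule sum.union_disjoint) (auto simp: sqs_def nsqs_def)
    show ?thesis by (subst U) (simp add: h1 h2)
  qed
  also have "\<dots> = int (card (sqs::'a set)) - int (card (nsqs::'a set))"
    by (simp add: qchar_def sqs_def nsqs_def)
  finally show ?thesis using qchar_sum0[OF assms] by simp
qed


lemma sq_times_nsq:
  fixes a b :: "'a::field"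
  assumes "c \<noteq> 0" "\<not> (\<exists>d. d^2 = b)"
  shows "\<not> (\<exists>d. d^2 = c^2 * b)"
proof
  assume "\<exists>d. d^2 = c^2 * b"
  then obtain d where "d^2 = c^2 * b" by blast
  hence "(d / c)^2 = b" using assms(1) by (simp add: power_divide)
  with assms(2) show False by blast
qed

lemma nsq_image:
  assumes "CHAR('a::{field,finite}) \<noteq> 2" "a \<in> (nsqs::'a set)"
  shows "(\<lambda>s. a * s) ` sqs = nsqs"
proof -
  have a0: "a \<noteq> 0" using assms(2) by (simp add: nsqs_def)
  have sub: "(\<lambda>s. a * s) ` sqs \<subseteq> nsqs"
  proof
    fix x assume "x \<in> (\<lambda>s. a * s) ` sqs"
    then obtain c where c: "c \<noteq> 0" "x = a * c^2" by (auto simp: sqs_def)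
    have "\<not> (\<exists>d. d^2 = c^2 * a)" using sq_times_nsq[OF c(1)] assms(2) by (simp add: nsqs_def)
    thus "x \<in> nsqs" using c a0 by (auto simp: nsqs_def mult.commute)
  qed
  have "card ((\<lambda>s. a * s) ` sqs) = card (sqs::'a set)"
    using a0 by (intro card_image inj_onI) auto
  also have "\<dots> = card (nsqs::'a set)" using card_sqs_nsqs[OF assms(1)] .
  finally show ?thesis using sub by (intro card_subset_eq) auto
qed

lemma qchar_mult:
  assumes "CHAR('a::{field,finite}) \<noteq> 2"
  shows "qchar (a * b) = qchar a * qchar (b::'a)"
proof (cases "a = 0 \<or> b = 0")
  case True thus ?thesis by (auto simp: qchar_def)
next
  case False
  hence a0: "a \<noteq> 0" and b0: "b \<noteq> 0" by auto
  show ?thesis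
  proof (cases "\<exists>c. c^2 = a")
    case sa: True
    then obtain c where c: "c^2 = a" by blast
    have c0: "c \<noteq> 0" using c a0 by auto
    show ?thesis
    proof (cases "\<exists>d. d^2 = b")
      case True
      then obtain d where "d^2 = b" by blast
      hence "(c*d)^2 = a * b" using c by (simp add: power_mult_distrib)
      thus ?thesis using sa True a0 b0 by (auto simp: qchar_def)
    next
      case False
      hence "\<not> (\<exists>d. d^2 = c^2 * b)" using sq_times_nsq[OF c0] by blast
      thus ?thesis using sa False a0 b0 c by (auto simp: qchar_def)
    qed
  next
    case na: False
    show ?thesis
    proof (cases "\<exists>d. d^2 = b")
      case True
      then obtain d where d: "d^2 = b" by blast
      have d0: "d \<noteq> 0" using d b0 by auto
      hence "\<not> (\<exists>e. e^2 = d^2 * a)" using sq_times_nsq[OF d0] na by blast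
      thus ?thesis using na True a0 b0 d by (auto simp: qchar_def mult.commute)
    next
      case False
      have "b \<in> nsqs" using False b0 by (simp add: nsqs_def)
      hence "b \<in> (\<lambda>s. a * s) ` sqs" using nsq_image[OF assms, of a] na a0 by (simp add: nsqs_def)
      then obtain c where c: "c \<noteq> 0" "b = a * c^2" by (auto simp: sqs_def)
      hence "(a * c)^2 = a * b" by (simp add: power2_eq_square)
      thus ?thesis using na False a0 b0 by (auto simp: qchar_def)
    qed
  qed
qed

lemma qchar_cases: "qchar x = 0 \<or> qchar x = 1 \<or> qchar x = -1"
  by (simp add: qchar_def)

lemma qchar_sq: "x \<noteq> 0 \<Longrightarrow> qchar x * qchar x = 1"
  by (simp add: qchar_def)

lemma qchar_inverse:
  assumes "CHAR('a::{field,finite}) \<noteq> 2"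
  shows "qchar (inverse x) = qchar (x::'a)"
proof (cases "x = 0")
  case False
  have "qchar x * qchar (inverse x) = qchar (x * inverse x)" using qchar_mult[OF assms] by simp
  also have "\<dots> = 1" using False by (simp add: qchar_def) (metis power_one)
  finally show ?thesis using qchar_cases[of x] by auto
qed simp

definition gs :: "'a::{field,finite} \<Rightarrow> complex" where
  "gs a = (\<Sum>x\<in>UNIV. add_char (a * x^2))"

lemma gs_eta:
  assumes "CHAR('a::{field,finite}) \<noteq> 2" "(a::'a) \<noteq> 0"
  shows "gs a = (\<Sum>t\<in>UNIV. of_int (qchar t) * add_char (a * (t::'a)))"
proof -
  have "gs a = (\<Sum>t\<in>UNIV. \<Sum>x\<in>{x::'a\<in>UNIV. x^2 = t}. add_char (a * x^2))"
    unfolding gs_def by (rule sum.group[symmetric]) auto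
  also have "\<dots> = (\<Sum>t\<in>UNIV. of_nat (card {x::'a. x^2 = t}) * add_char (a * t))"
    by (intro sum.cong refl) simp
  also have "\<dots> = (\<Sum>t\<in>UNIV. (1 + of_int (qchar t)) * add_char (a * (t::'a)))"
  proof (intro sum.cong refl)
    fix t :: 'a
    have "of_nat (card {x::'a. x^2 = t}) = (of_int (int (card {x::'a. x^2 = t})) :: complex)" by simp
    also have "\<dots> = 1 + of_int (qchar t)" by (simp only: sq_count[OF assms(1)]) simp
    finally show "of_nat (card {x::'a. x^2 = t}) * add_char (a * t) = (1 + of_int (qchar t)) * add_char (a * t)"
      by simp
  qed
  also have "\<dots> = (\<Sum>t\<in>UNIV. add_char (a * (t::'a))) + (\<Sum>t\<in>UNIV. of_int (qchar t) * add_char (a * (t::'a)))"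
    by (simp add: distrib_right sum.distrib)
  finally show ?thesis using assms(2) by (simp add: add_char_sum)
qed

lemma qchar_sum0_c:
  assumes "CHAR('a::{field,finite}) \<noteq> 2"
  shows "(\<Sum>t\<in>UNIV. (of_int (qchar (t::'a)) :: complex)) = 0"
proof -
  have "(\<Sum>t\<in>UNIV. (of_int (qchar (t::'a)) :: complex)) = of_int (\<Sum>t\<in>UNIV. qchar (t::'a))"
    by simp
  thus ?thesis using qchar_sum0[OF assms] by simp
qed

lemma gs_mult:
  assumes "CHAR('a::{field,finite}) \<noteq> 2" "(a::'a) \<noteq> 0"
  shows "gs a = of_int (qchar a) * gs (1::'a)"
proof -
  have "gs a = (\<Sum>t\<in>UNIV. of_int (qchar t) * add_char (a * (t::'a)))" by (rule gs_eta[OF assms])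
  also have "\<dots> = (\<Sum>u\<in>UNIV. of_int (qchar (u / a)) * add_char (u::'a))"
    using assms(2) by (intro sum.reindex_bij_witness[where j="\<lambda>u. a * u" and i="\<lambda>u. u / a"]) auto
  also have "\<dots> = (\<Sum>u\<in>UNIV. of_int (qchar a) * (of_int (qchar u) * add_char (u::'a)))"
  proof (intro sum.cong refl)
    fix u :: 'a
    have "qchar (u / a) = qchar u * qchar (inverse a)"
      by (simp add: divide_inverse qchar_mult[OF assms(1)])
    also have "\<dots> = qchar a * qchar u" by (simp add: qchar_inverse[OF assms(1)])
    finally show "of_int (qchar (u / a)) * add_char u = of_int (qchar a) * (of_int (qchar u) * add_char u)"
      by simp
  qed
  also have "\<dots> = of_int (qchar a) * (\<Sum>u\<in>UNIV. of_int (qchar u) * add_char (u::'a))"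
    by (simp add: sum_distrib_left)
  also have "\<dots> = of_int (qchar a) * gs (1::'a)"
    using gs_eta[OF assms(1), of 1] by simp
  finally show ?thesis .
qed

lemma gs_neg: "gs (- a) = cnj (gs a)"
  by (simp add: gs_def add_char_neg[symmetric])

lemma four_nz: assumes "CHAR('a::{field,finite}) \<noteq> 2" shows "(4::'a) \<noteq> 0"
proof -
  have h: "(4::'a) = 2 * 2" by simp
  show ?thesis using two_nz[OF assms] h by (metis mult_eq_0_iff)
qed

lemma half_ids:
  fixes x y u v :: "'a::field"
  assumes two: "(2::'a) \<noteq> 0"
  shows "((x-y)+(x+y))/2 = x \<and> ((x+y)-(x-y))/2 = y \<and> (u+v)/2 - (v-u)/2 = u \<and> (u+v)/2 + (v-u)/2 = (v::'a)"
proof -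
  have a: "(x-y)+(x+y) = 2*x" "(x+y)-(x-y) = 2*y" by (simp_all add: algebra_simps)
  have "(u+v) - (v-u) = 2*u" by (simp add: algebra_simps)
  hence "(u+v)/2 - (v-u)/2 = (2*u)/2" by (simp only: diff_divide_distrib[symmetric])
  hence e1: "(u+v)/2 - (v-u)/2 = u" using two by simp
  have "(u+v) + (v-u) = 2*v" by (simp add: algebra_simps)
  hence "(u+v)/2 + (v-u)/2 = (2*v)/2" by (simp only: add_divide_distrib[symmetric])
  hence e2: "(u+v)/2 + (v-u)/2 = v" using two by simp
  show ?thesis using a e1 e2 two by simp
qed

lemma gs_norm:
  assumes "CHAR('a::{field,finite}) \<noteq> 2" "(a::'a) \<noteq> 0"
  shows "gs a * gs (- a) = of_nat CARD('a)"
proof -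
  have two: "(2::'a) \<noteq> 0" by (rule two_nz[OF assms(1)])
  have four: "(4::'a) \<noteq> 0" by (rule four_nz[OF assms(1)])
  have "gs a * gs (- a) = (\<Sum>x\<in>UNIV. \<Sum>y\<in>UNIV. add_char (a * x^2) * add_char ((- a) * (y::'a)^2))"
    by (simp only: gs_def sum_product)
  also have "\<dots> = (\<Sum>x\<in>UNIV. \<Sum>y\<in>UNIV. add_char (a * x^2 - a * (y::'a)^2))"
  proof (intro sum.cong refl)
    fix x y :: 'a
    show "add_char (a * x^2) * add_char ((- a) * y^2) = add_char (a * x^2 - a * y^2)"
      using add_char_add[of "a * x^2" "(- a) * y^2"] by simp
  qed
  also have "\<dots> = (\<Sum>(x,y)\<in>UNIV. add_char (a * x^2 - a * (y::'a)^2))"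
    by (simp add: sum.cartesian_product)
  also have "\<dots> = (\<Sum>(u,v)\<in>UNIV. add_char (a * u * (v::'a)))"
  proof (rule sum.reindex_bij_witness[where i="\<lambda>(u,v). ((u+v)/2, (v-u)/2)" and j="\<lambda>(x,y). (x-y, x+y)"])
    fix p :: "'a \<times> 'a"
    obtain x y where p: "p = (x,y)" by (cases p)
    show "(case (case p of (x, y) \<Rightarrow> (x - y, x + y)) of (u, v) \<Rightarrow> ((u + v) / 2, (v - u) / 2)) = p"
      using half_ids[OF two, of x y x y] by (simp add: p)
    have "a * (x - y) * (x + y) = a * x^2 - a * y^2" by (simp add: power2_eq_square algebra_simps)
    thus "(case (case p of (x, y) \<Rightarrow> (x - y, x + y)) of (u, v) \<Rightarrow> add_char (a * u * v))
          = (case p of (x, y) \<Rightarrow> add_char (a * x^2 - a * y^2))"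
      by (simp add: p)
  next
    fix p :: "'a \<times> 'a"
    obtain u v where p: "p = (u,v)" by (cases p)
    show "(case (case p of (u, v) \<Rightarrow> ((u + v) / 2, (v - u) / 2)) of (x, y) \<Rightarrow> (x - y, x + y)) = p"
      using half_ids[OF two, of u v u v] by (simp add: p)
  qed auto
  also have "\<dots> = (\<Sum>u\<in>UNIV. \<Sum>v\<in>UNIV. add_char ((a * u) * (v::'a)))"
    by (simp add: sum.cartesian_product)
  also have "\<dots> = (\<Sum>u\<in>UNIV. if a * u = 0 then of_nat CARD('a) else 0)"
    by (simp only: add_char_sum)
  also have "\<dots> = (\<Sum>u\<in>{0::'a}. of_nat CARD('a))"
    using assms(2) by (intro sum.mono_neutral_cong_right) auto
  finally show ?thesis by simp
qed

lemma gs_complete_square: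
  assumes "CHAR('a::{field,finite}) \<noteq> 2" "(a::'a) \<noteq> 0"
  shows "(\<Sum>t\<in>UNIV. add_char (a * t^2 - b * t)) = add_char (- (b^2 / (4 * a))) * gs (a::'a)"
proof -
  have two: "(2::'a) \<noteq> 0" by (rule two_nz[OF assms(1)])
  have four: "(4::'a) \<noteq> 0"
  proof -
    have h: "(4::'a) = 2 * 2" by simp
    show ?thesis using two h by (metis mult_eq_0_iff)
  qed
  have "(\<Sum>t\<in>UNIV. add_char (a * t^2 - b * t)) = (\<Sum>t\<in>UNIV. add_char (a * (t - b / (2*a))^2 - b^2 / (4 * a)))"
  proof (intro sum.cong refl)
    fix t :: 'a
    define e where "e = b / (2*a)"
    have b_eq: "b = 2 * a * e" using two assms(2) by (simp add: e_def)
    have b2: "b^2 / (4 * a) = a * e^2"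
      using four assms(2) by (simp add: b_eq power2_eq_square field_simps)
    have "a * t^2 - b * t = a * (t - e)^2 - a * e^2"
      by (simp add: b_eq power2_eq_square algebra_simps)
    hence "a * t^2 - b * t = a * (t - b / (2*a))^2 - b^2 / (4 * a)"
      by (simp add: b2 e_def)
    thus "add_char (a * t^2 - b * t) = add_char (a * (t - b / (2*a))^2 - b^2 / (4 * a))" by simp
  qed
  also have "\<dots> = (\<Sum>t\<in>UNIV. add_char (a * t^2 - b^2 / (4 * a)))"
    by (rule sum.reindex_bij_witness[where j="\<lambda>t. t - b / (2*a)" and i="\<lambda>t. t + b / (2*a)"]) auto
  also have "\<dots> = (\<Sum>t\<in>UNIV. add_char (- (b^2 / (4 * a))) * add_char (a * t^2))"
  proof (intro sum.cong refl)
    fix t :: 'a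
    show "add_char (a * t^2 - b^2 / (4 * a)) = add_char (- (b^2 / (4 * a))) * add_char (a * t^2)"
      using add_char_add[of "- (b^2 / (4 * a))" "a * t^2"] by (simp add: algebra_simps)
  qed
  also have "\<dots> = add_char (- (b^2 / (4 * a))) * gs a"
    by (simp add: gs_def sum_distrib_left)
  finally show ?thesis .
qed

lemma sum_nz_inv:
  "(\<Sum>s\<in>UNIV-{0}. f (inverse (s::'a::{field,finite}))) = (\<Sum>u\<in>UNIV-{0}. f u)"
  by (rule sum.reindex_bij_witness[where i=inverse and j=inverse]) auto

lemma twist_sum:
  "(\<Sum>s\<in>UNIV-{0}. add_char (c * inverse (s::'a::{field,finite}))) =
     (if c = 0 then of_nat CARD('a) - 1 else -1)"
proof -
  have "(\<Sum>s\<in>UNIV-{0}. add_char (c * inverse (s::'a))) = (\<Sum>u\<in>UNIV-{0}. add_char (c * (u::'a)))"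
    by (rule sum_nz_inv)
  also have "\<dots> = (\<Sum>u\<in>UNIV. add_char (c * (u::'a))) - add_char (c * 0)"
    by (simp add: sum_diff1)
  finally show ?thesis by (simp add: add_char_sum)
qed

lemma twist_sum_eta:
  assumes "CHAR('a::{field,finite}) \<noteq> 2"
  shows "(\<Sum>s\<in>UNIV-{0}. of_int (qchar s) * add_char (c * inverse (s::'a))) =
     (if c = 0 then 0 else gs c)"
proof -
  have "(\<Sum>s\<in>UNIV-{0}. of_int (qchar s) * add_char (c * inverse (s::'a)))
      = (\<Sum>s\<in>UNIV-{0}. of_int (qchar (inverse (inverse s))) * add_char (c * inverse (s::'a)))"
    by simp
  also have "\<dots> = (\<Sum>u\<in>UNIV-{0}. of_int (qchar (inverse u)) * add_char (c * (u::'a)))"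
    by (rule sum_nz_inv[where f="\<lambda>u. of_int (qchar (inverse u)) * add_char (c * u)"])
  also have "\<dots> = (\<Sum>u\<in>UNIV-{0}. of_int (qchar u) * add_char (c * (u::'a)))"
    by (simp add: qchar_inverse[OF assms])
  also have "\<dots> = (\<Sum>u\<in>UNIV. of_int (qchar u) * add_char (c * (u::'a)))"
    by (intro sum.mono_neutral_left) (auto simp: qchar_def)
  finally show ?thesis
    using gs_eta[OF assms, of c] qchar_sum0_c[OF assms] by auto
qed

lemma finite_vecs [simp]: "finite (vecs d :: (nat \<Rightarrow> 'a::finite) set)"
  by (simp add: vecs_def finite_PiE)

lemma add_char_sum_hom:
  "finite A \<Longrightarrow> add_char (\<Sum>i\<in>A. f i) = (\<Prod>i\<in>A. add_char (f i :: 'a::{field,finite}))"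
  by (induction A rule: finite_induct) (simp_all add: add_char_add)

lemma orth:
  "(\<Sum>m\<in>vecs d. add_char (dotp d m w)) =
     (if \<forall>i<d. w i = 0 then of_nat (CARD('a) ^ d) else (0::complex))"
  for w :: "nat \<Rightarrow> 'a::{field,finite}"
proof -
  have "(\<Sum>m\<in>vecs d. add_char (dotp d m w)) = (\<Sum>m\<in>PiE {..<d} (\<lambda>_. UNIV). \<Prod>i<d. add_char (m i * w i))"
    by (simp add: vecs_def dotp_def add_char_sum_hom)
  also have "\<dots> = (\<Prod>i<d. \<Sum>t\<in>UNIV. add_char (t * w i))"
    by (rule prod_sum_PiE[symmetric]) auto
  also have "\<dots> = (\<Prod>i<d. if w i = 0 then of_nat CARD('a) else 0)"
    by (intro prod.cong refl) (simp add: mult.commute[of _ "w _"] add_char_sum)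
  also have "\<dots> = (if \<forall>i<d. w i = 0 then of_nat (CARD('a) ^ d) else (0::complex))"
  proof (cases "\<forall>i<d. w i = 0")
    case True thus ?thesis by simp
  next
    case False
    then obtain i where "i < d" "w i \<noteq> 0" by blast
    thus ?thesis by (intro trans[OF prod_zero]) (auto intro!: bexI[of _ i])
  qed
  finally show ?thesis .
qed

definition Ssum :: "nat \<Rightarrow> (nat \<Rightarrow> 'a::{field,finite}) set \<Rightarrow> (nat \<Rightarrow> 'a) \<Rightarrow> complex" where
  "Ssum d E m = (\<Sum>x\<in>E. add_char (dotp d m x))"

definition ghat :: "nat \<Rightarrow> ((nat \<Rightarrow> 'a::{field,finite}) \<Rightarrow> complex) \<Rightarrow> (nat \<Rightarrow> 'a) \<Rightarrow> complex" where
  "ghat d g m = (\<Sum>z\<in>vecs d. g z * cnj (add_char (dotp d m z)))"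

lemma dotp_lin: "dotp d m x - dotp d m y - dotp d m z = dotp d m (\<lambda>i. x i - y i - z i)"
  by (simp add: dotp_def sum_subtractf[symmetric] algebra_simps)

lemma swap_in3:
  "(\<Sum>m\<in>M. \<Sum>z\<in>Z. \<Sum>x\<in>X. \<Sum>y\<in>Y. F m z x y) = (\<Sum>z\<in>Z. \<Sum>x\<in>X. \<Sum>y\<in>Y. \<Sum>m\<in>M. (F m z x y :: complex))"
proof -
  have "(\<Sum>m\<in>M. \<Sum>z\<in>Z. \<Sum>x\<in>X. \<Sum>y\<in>Y. F m z x y) = (\<Sum>z\<in>Z. \<Sum>m\<in>M. \<Sum>x\<in>X. \<Sum>y\<in>Y. F m z x y)"
    by (rule sum.swap)
  also have "\<dots> = (\<Sum>z\<in>Z. \<Sum>x\<in>X. \<Sum>m\<in>M. \<Sum>y\<in>Y. F m z x y)"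
    by (rule sum.cong[OF refl], rule sum.swap)
  also have "\<dots> = (\<Sum>z\<in>Z. \<Sum>x\<in>X. \<Sum>y\<in>Y. \<Sum>m\<in>M. F m z x y)"
    by (rule sum.cong[OF refl], rule sum.cong[OF refl], rule sum.swap)
  finally show ?thesis .
qed

lemma swap_out2:
  "(\<Sum>z\<in>Z. \<Sum>x\<in>X. \<Sum>y\<in>Y. G z x y) = (\<Sum>x\<in>X. \<Sum>y\<in>Y. \<Sum>z\<in>Z. (G z x y :: complex))"
proof -
  have "(\<Sum>z\<in>Z. \<Sum>x\<in>X. \<Sum>y\<in>Y. G z x y) = (\<Sum>x\<in>X. \<Sum>z\<in>Z. \<Sum>y\<in>Y. G z x y)"
    by (rule sum.swap)
  also have "\<dots> = (\<Sum>x\<in>X. \<Sum>y\<in>Y. \<Sum>z\<in>Z. G z x y)"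
    by (rule sum.cong[OF refl], rule sum.swap)
  finally show ?thesis .
qed

lemma conv_identity:
  fixes E :: "(nat \<Rightarrow> 'a::{field,finite}) set" and g :: "(nat \<Rightarrow> 'a) \<Rightarrow> complex"
  assumes E: "E \<subseteq> vecs d"
    and loc: "\<And>z z'. (\<forall>i<d. z i = z' i) \<Longrightarrow> g z = g z'"
  shows "(\<Sum>x\<in>E. \<Sum>y\<in>E. g (\<lambda>i. x i - y i)) =
     (1 / of_nat (CARD('a) ^ d)) * (\<Sum>m\<in>vecs d. ghat d g m * (Ssum d E m * cnj (Ssum d E m)))"
proof -
  let ?q = "of_nat (CARD('a) ^ d) :: complex"
  have q0: "?q \<noteq> 0" by simp
  have "(\<Sum>m\<in>vecs d. ghat d g m * (Ssum d E m * cnj (Ssum d E m)))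
      = (\<Sum>m\<in>vecs d. \<Sum>z\<in>vecs d. \<Sum>x\<in>E. \<Sum>y\<in>E. g z * add_char (dotp d m (\<lambda>i. x i - y i - z i)))"
  proof (rule sum.cong[OF refl])
    fix m :: "nat \<Rightarrow> 'a"
    have s1: "Ssum d E m * cnj (Ssum d E m) = (\<Sum>x\<in>E. \<Sum>y\<in>E. add_char (dotp d m x) * cnj (add_char (dotp d m y)))"
      by (simp only: Ssum_def cnj_sum sum_product)
    have "ghat d g m * (Ssum d E m * cnj (Ssum d E m))
        = (\<Sum>z\<in>vecs d. \<Sum>x\<in>E. (g z * cnj (add_char (dotp d m z))) * (\<Sum>y\<in>E. add_char (dotp d m x) * cnj (add_char (dotp d m y))))"
      by (simp only: s1 ghat_def sum_product)
    also have "\<dots> = (\<Sum>z\<in>vecs d. \<Sum>x\<in>E. \<Sum>y\<in>E. (g z * cnj (add_char (dotp d m z))) * (add_char (dotp d m x) * cnj (add_char (dotp d m y))))"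
      by (simp only: sum_distrib_left)
    also have "\<dots> = (\<Sum>z\<in>vecs d. \<Sum>x\<in>E. \<Sum>y\<in>E. g z * add_char (dotp d m (\<lambda>i. x i - y i - z i)))"
    proof (intro sum.cong refl)
      fix z x y :: "nat \<Rightarrow> 'a"
      show "(g z * cnj (add_char (dotp d m z))) * (add_char (dotp d m x) * cnj (add_char (dotp d m y))) =
            g z * add_char (dotp d m (\<lambda>i. x i - y i - z i))"
        by (simp only: dotp_lin[symmetric] add_char_diff mult_ac)
    qed
    finally show "ghat d g m * (Ssum d E m * cnj (Ssum d E m)) = \<dots>" .
  qed
  also have "\<dots> = (\<Sum>z\<in>vecs d. \<Sum>x\<in>E. \<Sum>y\<in>E. \<Sum>m\<in>vecs d. g z * add_char (dotp d m (\<lambda>i. x i - y i - z i)))"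
    by (rule swap_in3)
  also have "\<dots> = (\<Sum>z\<in>vecs d. \<Sum>x\<in>E. \<Sum>y\<in>E. if z = restrict (\<lambda>i. x i - y i) {..<d} then ?q * g (\<lambda>i. x i - y i) else 0)"
  proof (intro sum.cong refl)
    fix z x y :: "nat \<Rightarrow> 'a"
    assume z: "z \<in> vecs d"
    let ?z0 = "restrict (\<lambda>i. x i - y i) {..<d}"
    have iff: "(\<forall>i<d. x i - y i - z i = 0) \<longleftrightarrow> z = ?z0"
    proof
      assume h: "\<forall>i<d. x i - y i - z i = 0"
      show "z = ?z0"
      proof
        fix i show "z i = ?z0 i"
          using z h by (cases "i < d") (auto simp: vecs_def PiE_def extensional_def)
      qed
    qed auto
    have iff2: "(\<forall>i<d. x i - y i = z i) \<longleftrightarrow> z = ?z0" using iff by (simp add: eq_iff_diff_eq_0[symmetric])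
    have gz: "z = ?z0 \<Longrightarrow> g z = g (\<lambda>i. x i - y i)" by (rule loc) simp
    show "(\<Sum>m\<in>vecs d. g z * add_char (dotp d m (\<lambda>i. x i - y i - z i))) =
          (if z = ?z0 then ?q * g (\<lambda>i. x i - y i) else 0)"
      using gz by (simp add: sum_distrib_left[symmetric] orth iff iff2)
  qed
  also have "\<dots> = (\<Sum>x\<in>E. \<Sum>y\<in>E. \<Sum>z\<in>vecs d. if z = restrict (\<lambda>i. x i - y i) {..<d} then ?q * g (\<lambda>i. x i - y i) else 0)"
    by (rule swap_out2)
  also have "\<dots> = (\<Sum>x\<in>E. \<Sum>y\<in>E. ?q * g (\<lambda>i. x i - y i))"
  proof (intro sum.cong refl)
    fix x y :: "nat \<Rightarrow> 'a"
    have "restrict (\<lambda>i. x i - y i) {..<d} \<in> vecs d" by (simp add: vecs_def)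
    thus "(\<Sum>z\<in>vecs d. if z = restrict (\<lambda>i. x i - y i) {..<d} then ?q * g (\<lambda>i. x i - y i) else 0) = ?q * g (\<lambda>i. x i - y i)"
      by (simp add: sum.delta[OF finite_vecs])
  qed
  finally show ?thesis using q0 by (simp add: sum_distrib_left[symmetric])
qed

definition cf :: "nat \<Rightarrow> 'a::field \<Rightarrow> nat \<Rightarrow> 'a" where
  "cf d e i = (if i < d - 1 then (-1)^i else if even d then - e else e)"

lemma qform_sum:
  assumes "1 \<le> d"
  shows "qform d e x = (\<Sum>i<d. cf d e i * x i ^ 2)"
proof -
  have U: "{..<d} = insert (d-1) {..<d-1}" using assms by auto
  have "(\<Sum>i<d. cf d e i * x i ^ 2) = cf d e (d-1) * x (d-1) ^ 2 + (\<Sum>i<d-1. cf d e i * x i ^ 2)"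
    by (subst U) (simp add: sum.insert)
  also have "(\<Sum>i<d-1. cf d e i * x i ^ 2) = (\<Sum>i<d-1. (-1)^i * x i ^ 2)"
    by (intro sum.cong refl) (simp add: cf_def)
  finally show ?thesis by (simp add: qform_def cf_def)
qed

lemma qform_loc:
  assumes "1 \<le> d" "\<forall>i<d. z i = z' i"
  shows "qform d e z = qform d e z'"
  using assms by (simp add: qform_sum)

lemma cf_inv: "cf d (inverse e) i = inverse (cf d e (i::nat) :: 'a::field)"
proof -
  have "inverse ((-1::'a)^i) = (-1)^i"
    by (simp add: power_inverse[symmetric])
  thus ?thesis by (simp add: cf_def inverse_minus_eq)
qed

lemma cf_nz: "e \<noteq> 0 \<Longrightarrow> cf d e i \<noteq> (0::'a::field)"
  by (simp add: cf_def)

lemma dotp_comm: "dotp d m z = dotp d z m"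
  by (simp add: dotp_def mult.commute)

lemma ghat_zero:
  "ghat d (\<lambda>z. add_char (0 * qform d e z)) m =
     (if \<forall>i<d. m i = 0 then of_nat (CARD('a) ^ d) else (0::complex))"
  for m :: "nat \<Rightarrow> 'a::{field,finite}"
proof -
  have "ghat d (\<lambda>z. add_char (0 * qform d e z)) m = cnj (\<Sum>z\<in>vecs d. add_char (dotp d z m))"
    by (simp add: ghat_def cnj_sum dotp_comm)
  also have "\<dots> = cnj (if \<forall>i<d. m i = 0 then of_nat (CARD('a) ^ d) else (0::complex))"
    by (simp only: orth)
  finally show ?thesis by simp
qed

lemma ghat_s:
  fixes m :: "nat \<Rightarrow> 'a::{field,finite}"
  assumes char: "CHAR('a) \<noteq> 2" and s: "s \<noteq> 0" and e: "e \<noteq> 0" and d: "1 \<le> d"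
  shows "ghat d (\<lambda>z. add_char (s * qform d e z)) m =
     add_char (- (qform d (inverse e) m) / 4 * inverse s) * (\<Prod>i<d. gs (s * cf d e i))"
proof -
  have four: "(4::'a) \<noteq> 0" by (rule four_nz[OF char])
  have "ghat d (\<lambda>z. add_char (s * qform d e z)) m
      = (\<Sum>z\<in>vecs d. add_char (\<Sum>i<d. (s * cf d e i) * z i ^ 2 - m i * z i))"
    unfolding ghat_def
  proof (intro sum.cong refl)
    fix z :: "nat \<Rightarrow> 'a"
    have "s * qform d e z - dotp d m z = (\<Sum>i<d. (s * cf d e i) * z i ^ 2 - m i * z i)"
      by (simp add: qform_sum[OF d] dotp_def sum_subtractf sum_distrib_left mult.assoc)
    thus "add_char (s * qform d e z) * cnj (add_char (dotp d m z)) = add_char (\<Sum>i<d. (s * cf d e i) * z i ^ 2 - m i * z i)"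
      by (simp add: add_char_diff[symmetric])
  qed
  also have "\<dots> = (\<Sum>z\<in>PiE {..<d} (\<lambda>_. UNIV). \<Prod>i<d. add_char ((s * cf d e i) * z i ^ 2 - m i * z i))"
    by (simp add: vecs_def add_char_sum_hom)
  also have "\<dots> = (\<Prod>i<d. \<Sum>t\<in>UNIV. add_char ((s * cf d e i) * t ^ 2 - m i * t))"
    by (rule prod_sum_PiE[symmetric]) auto
  also have "\<dots> = (\<Prod>i<d. add_char (- (m i ^ 2 / (4 * (s * cf d e i)))) * gs (s * cf d e i))"
    by (intro prod.cong refl gs_complete_square[OF char]) (simp add: s cf_nz[OF e])
  also have "\<dots> = add_char (\<Sum>i<d. - (m i ^ 2 / (4 * (s * cf d e i)))) * (\<Prod>i<d. gs (s * cf d e i))"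
    by (simp add: prod.distrib add_char_sum_hom)
  also have "(\<Sum>i<d. - (m i ^ 2 / (4 * (s * cf d e i)))) = - (qform d (inverse e) m) / 4 * inverse s"
  proof -
    have "(\<Sum>i<d. - (m i ^ 2 / (4 * (s * cf d e i)))) = (\<Sum>i<d. - (cf d (inverse e) i * m i ^ 2) / 4 * inverse s)"
    proof (intro sum.cong refl)
      fix i
      have "cf d e i \<noteq> 0" by (rule cf_nz[OF e])
      thus "- (m i ^ 2 / (4 * (s * cf d e i))) = - (cf d (inverse e) i * m i ^ 2) / 4 * inverse s"
        using s four unfolding cf_inv by (simp add: field_simps)
    qed
    also have "\<dots> = - (\<Sum>i<d. cf d (inverse e) i * m i ^ 2) / 4 * inverse s"
      by (simp add: sum_divide_distrib[symmetric] sum_distrib_right[symmetric] sum_negf)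
    finally show ?thesis by (simp add: qform_sum[OF d])
  qed
  finally show ?thesis .
qed

lemma pair_prod:
  assumes char: "CHAR('a::{field,finite}) \<noteq> 2" and s: "(s::'a) \<noteq> 0"
  shows "(\<Prod>i<2*k. gs (s * (-1)^i)) = of_nat CARD('a) ^ k"
proof (induction k)
  case (Suc k)
  have "2 * Suc k = Suc (Suc (2*k))" by simp
  hence "(\<Prod>i<2 * Suc k. gs (s * (-1)^i)) = (\<Prod>i<2*k. gs (s * (-1)^i)) * gs s * gs (- s)"
    by (simp add: power_mult)
  also have "\<dots> = of_nat CARD('a) ^ k * of_nat CARD('a)"
    using Suc.IH gs_norm[OF char s] by (simp add: mult.assoc)
  finally show ?case by simp
qed simp

lemma P_even:
  assumes char: "CHAR('a::{field,finite}) \<noteq> 2" and s: "(s::'a) \<noteq> 0" and e: "e \<noteq> 0"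
    and d: "even d" "2 \<le> d"
  shows "(\<Prod>i<d. gs (s * cf d e i)) = of_int (qchar e) * of_nat CARD('a) ^ (d div 2)"
proof -
  obtain j where j: "d = 2*j" using d(1) by (rule evenE)
  define k where "k = j - 1"
  have k: "d = 2*k + 2" using j d(2) unfolding k_def by linarith
  have "d = Suc (Suc (2*k))" using k by simp
  hence "(\<Prod>i<d. gs (s * cf d e i)) = (\<Prod>i<2*k. gs (s * cf d e i)) * gs (s * cf d e (2*k)) * gs (s * cf d e (Suc (2*k)))"
    by (simp add: mult.assoc)
  also have "(\<Prod>i<2*k. gs (s * cf d e i)) = (\<Prod>i<2*k. gs (s * (-1)^i))"
    by (intro prod.cong refl) (simp add: cf_def k)
  also have "cf d e (2*k) = 1" by (simp add: cf_def k power_mult)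
  also have "cf d e (Suc (2*k)) = - e" using d by (simp add: cf_def k)
  also have "gs (s * - e) = of_int (qchar e) * gs (- s)"
  proof -
    have "gs (s * - e) = of_int (qchar (- s * e)) * gs (1::'a)"
      using gs_mult[OF char, of "s * - e"] s e by simp
    also have "\<dots> = of_int (qchar e) * (of_int (qchar (- s)) * gs (1::'a))"
      using qchar_mult[OF char, of "-s" e] by (simp add: mult_ac)
    also have "of_int (qchar (- s)) * gs (1::'a) = gs (- s)"
      using gs_mult[OF char, of "- s"] s by simp
    finally show ?thesis .
  qed
  finally show ?thesis
    using pair_prod[OF char s, of k] gs_norm[OF char s] k by (simp add: mult_ac)
qed

lemma P_odd:
  assumes char: "CHAR('a::{field,finite}) \<noteq> 2" and s: "(s::'a) \<noteq> 0"
    and d: "odd d"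
  shows "(\<Prod>i<d. gs (s * cf d e i)) = of_nat CARD('a) ^ (d div 2) * gs (s * e)"
proof -
  obtain k where k: "d = 2*k + 1" using d oddE by blast
  have "d = Suc (2*k)" using k by simp
  hence "(\<Prod>i<d. gs (s * cf d e i)) = (\<Prod>i<2*k. gs (s * cf d e i)) * gs (s * cf d e (2*k))"
    by simp
  also have "(\<Prod>i<2*k. gs (s * cf d e i)) = (\<Prod>i<2*k. gs (s * (-1)^i))"
    by (intro prod.cong refl) (simp add: cf_def k)
  also have "cf d e (2*k) = e" using d by (simp add: cf_def k)
  finally show ?thesis
    using pair_prod[OF char s, of k] k by simp
qed

definition Tm :: "nat \<Rightarrow> 'a::{field,finite} \<Rightarrow> (nat \<Rightarrow> 'a) \<Rightarrow> complex" where
  "Tm d e m = (\<Sum>s\<in>UNIV-{0}. add_char (- (qform d (inverse e) m) / 4 * inverse s) * (\<Prod>i<d. gs (s * cf d e i)))"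

lemma wcount_sum:
  assumes E: "E \<subseteq> vecs d"
  shows "of_nat (wcount d e E t) =
    (\<Sum>x\<in>E. \<Sum>y\<in>E. if qform d e (\<lambda>i. x i - y i) = t then 1 else (0::complex))"
proof -
  have finE: "finite E" using E finite_subset finite_vecs by blast
  have set_eq: "{(x, y). x \<in> E \<and> y \<in> E \<and> normQ d e (\<lambda>i. x i - y i) = t} =
      {p \<in> E \<times> E. qform d e (\<lambda>i. fst p i - snd p i) = t}"
    by (auto simp: normQ_def)
  have "of_nat (wcount d e E t) = (\<Sum>p\<in>{p \<in> E \<times> E. qform d e (\<lambda>i. fst p i - snd p i) = t}. (1::complex))"
    unfolding wcount_def set_eq by simp
  also have "\<dots> = (\<Sum>p\<in>E \<times> E. if qform d e (\<lambda>i. fst p i - snd p i) = t then 1 else (0::complex))"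
    by (rule sum.inter_filter) (use finE in simp)
  also have "\<dots> = (\<Sum>x\<in>E. \<Sum>y\<in>E. if qform d e (\<lambda>i. x i - y i) = t then 1 else (0::complex))"
    by (simp add: sum.cartesian_product')
  finally show ?thesis .
qed

lemma zero_vec_iff:
  "m \<in> vecs d \<Longrightarrow> (\<forall>i<d. m i = 0) \<longleftrightarrow> m = restrict (\<lambda>_. 0) {..<d}"
  by (auto simp: vecs_def PiE_def extensional_def fun_eq_iff)

lemma Ssum_zero:
  "Ssum d E (restrict (\<lambda>_. 0) {..<d}) = of_nat (card E)"
  by (simp add: Ssum_def dotp_def)

lemma plancherel:
  fixes E :: "(nat \<Rightarrow> 'a::{field,finite}) set"
  assumes E: "E \<subseteq> vecs d"
  shows "of_nat (card E) = (1 / of_nat (CARD('a) ^ d)) * (\<Sum>m\<in>vecs d. Ssum d E m * cnj (Ssum d E m))"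
proof -
  define g0 :: "(nat \<Rightarrow> 'a) \<Rightarrow> complex" where "g0 z = (if \<forall>i<d. z i = 0 then 1 else 0)" for z
  have loc: "g0 z = g0 z'" if "\<forall>i<d. z i = z' i" for z z' using that by (simp add: g0_def)
  have lhs: "(\<Sum>x\<in>E. \<Sum>y\<in>E. g0 (\<lambda>i. x i - y i)) = of_nat (card E)"
  proof -
    have "(\<Sum>x\<in>E. \<Sum>y\<in>E. g0 (\<lambda>i. x i - y i)) = (\<Sum>x\<in>E. \<Sum>y\<in>E. if y = x then 1 else 0)"
    proof (intro sum.cong refl)
      fix x y assume "x \<in> E" "y \<in> E"
      hence xy: "x \<in> vecs d" "y \<in> vecs d" using E by auto
      have "(\<forall>i<d. x i - y i = 0) \<longleftrightarrow> y = x"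
      proof
        assume h: "\<forall>i<d. x i - y i = 0"
        show "y = x"
        proof
          fix i show "y i = x i" using h xy by (cases "i < d") (auto simp: vecs_def PiE_def extensional_def)
        qed
      qed auto
      thus "g0 (\<lambda>i. x i - y i) = (if y = x then 1 else 0)" by (simp add: g0_def)
    qed
    also have "\<dots> = (\<Sum>x\<in>E. 1)"
    proof (intro sum.cong refl)
      have finE: "finite E" using E finite_subset finite_vecs by blast
      fix x assume "x \<in> E"
      thus "(\<Sum>y\<in>E. if y = x then 1 else 0) = (1::complex)" using finE by (simp add: sum.delta)
    qed
    finally show ?thesis by simp
  qed
  have gh: "ghat d g0 m = 1" for m
  proof -
    have "ghat d g0 m = (\<Sum>z\<in>vecs d. if z = restrict (\<lambda>_. 0) {..<d} then cnj (add_char (dotp d m z)) else 0)"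
      unfolding ghat_def
    proof (intro sum.cong refl)
      fix z :: "nat \<Rightarrow> 'a" assume z: "z \<in> vecs d"
      have iff: "(\<forall>i<d. z i = 0) = (z = restrict (\<lambda>_. 0) {..<d})" by (rule zero_vec_iff[OF z])
      show "g0 z * cnj (add_char (dotp d m z)) = (if z = restrict (\<lambda>_. 0) {..<d} then cnj (add_char (dotp d m z)) else 0)"
      proof (cases "z = restrict (\<lambda>_. 0) {..<d}")
        case True
        hence "\<forall>i<d. z i = 0" using iff by blast
        hence g1: "g0 z = 1" by (simp add: g0_def)
        show ?thesis by (simp only: g1 if_P[OF True] mult_1_left)
      next
        case False
        hence "\<not> (\<forall>i<d. z i = 0)" using iff by blast
        hence g1: "g0 z = 0" by (simp add: g0_def)
        show ?thesis by (simp only: g1 if_not_P[OF False] mult_zero_left)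
      qed
    qed
    also have "\<dots> = cnj (add_char (dotp d m (restrict (\<lambda>_. 0) {..<d})))"
    proof -
      have "restrict (\<lambda>_. 0::'a) {..<d} \<in> vecs d" by (simp add: vecs_def)
      thus ?thesis by (simp only: sum.delta[OF finite_vecs] if_P)
    qed
    also have "\<dots> = 1" by (simp add: dotp_def)
    finally show ?thesis .
  qed
  show ?thesis using conv_identity[where g=g0, OF E loc] lhs by (simp add: gh)
qed


lemma main_identity:
  fixes E :: "(nat \<Rightarrow> 'a::{field,finite}) set"
  assumes char: "CHAR('a) \<noteq> 2" and d: "1 \<le> d" and e: "e \<noteq> 0" and E: "E \<subseteq> vecs d"
  shows "of_nat (wcount d e E 0) = of_nat (card E)^2 / of_nat CARD('a)
     + (1 / of_nat CARD('a)^(d+1)) * (\<Sum>m\<in>vecs d. Tm d e m * (Ssum d E m * cnj (Ssum d E m)))"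
proof -
  define g where "g z = (if qform d e z = 0 then 1 else (0::complex))" for z
  define NC where "NC m = Ssum d E m * cnj (Ssum d E m)" for m
  let ?q = "of_nat CARD('a) :: complex"
  have q0: "?q \<noteq> 0" by simp
  have loc: "g z = g z'" if "\<forall>i<d. z i = z' i" for z z' using qform_loc[OF d that] by (simp add: g_def)
  have step1: "of_nat (wcount d e E 0) = (\<Sum>x\<in>E. \<Sum>y\<in>E. g (\<lambda>i. x i - y i))"
    by (simp add: wcount_sum[OF E] g_def)
  also have "\<dots> = (1 / of_nat (CARD('a)^d)) * (\<Sum>m\<in>vecs d. ghat d g m * NC m)"
    unfolding NC_def by (rule conv_identity[where g=g, OF E loc])
  finally have W1: "of_nat (wcount d e E 0) = (1 / of_nat (CARD('a)^d)) * (\<Sum>m\<in>vecs d. ghat d g m * NC m)" .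
  have gz: "g z = (1/?q) * (\<Sum>s\<in>UNIV. add_char (s * qform d e z))" for z
    using add_char_sum[of "qform d e z"] by (simp add: g_def mult.commute)
  have gh: "ghat d g m = (1/?q) * ((if \<forall>i<d. m i = 0 then of_nat (CARD('a)^d) else 0) + Tm d e m)" for m
  proof -
    have "ghat d g m = (\<Sum>z\<in>vecs d. (1/?q) * (\<Sum>s\<in>UNIV. add_char (s * qform d e z) * cnj (add_char (dotp d m z))))"
      unfolding ghat_def gz by (simp add: sum_distrib_right mult.assoc)
    also have "\<dots> = (1/?q) * (\<Sum>z\<in>vecs d. \<Sum>s\<in>UNIV. add_char (s * qform d e z) * cnj (add_char (dotp d m z)))"
      by (simp only: sum_distrib_left)
    also have "(\<Sum>z\<in>vecs d. \<Sum>s\<in>UNIV. add_char (s * qform d e z) * cnj (add_char (dotp d m z)))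
        = (\<Sum>s\<in>UNIV. \<Sum>z\<in>vecs d. add_char (s * qform d e z) * cnj (add_char (dotp d m z)))"
      by (rule sum.swap)
    also have "\<dots> = (\<Sum>s\<in>UNIV. ghat d (\<lambda>z. add_char (s * qform d e z)) m)"
      by (simp only: ghat_def)
    also have "\<dots> = ghat d (\<lambda>z. add_char (0 * qform d e z)) m + (\<Sum>s\<in>UNIV-{0}. ghat d (\<lambda>z. add_char (s * qform d e z)) m)"
      by (rule sum.remove) auto
    also have "ghat d (\<lambda>z. add_char (0 * qform d e z)) m = (if \<forall>i<d. m i = 0 then of_nat (CARD('a)^d) else 0)"
      by (rule ghat_zero)
    also have "(\<Sum>s\<in>UNIV-{0}. ghat d (\<lambda>z. add_char (s * qform d e z)) m) = Tm d e m"
      unfolding Tm_def by (intro sum.cong refl ghat_s[OF char _ e d]) auto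
    finally show ?thesis .
  qed
  have z0: "restrict (\<lambda>_. 0::'a) {..<d} \<in> vecs d" by (simp add: vecs_def)
  have "(\<Sum>m\<in>vecs d. ghat d g m * NC m)
      = (\<Sum>m\<in>vecs d. (1/?q) * ((if \<forall>i<d. m i = 0 then of_nat (CARD('a)^d) else 0) * NC m + Tm d e m * NC m))"
    by (intro sum.cong refl) (simp only: gh distrib_right mult.assoc)
  also have "\<dots> = (1/?q) * ((\<Sum>m\<in>vecs d. (if \<forall>i<d. m i = 0 then of_nat (CARD('a)^d) else 0) * NC m) + (\<Sum>m\<in>vecs d. Tm d e m * NC m))"
    by (simp only: sum_distrib_left[symmetric] sum.distrib)
  also have "(\<Sum>m\<in>vecs d. (if \<forall>i<d. m i = 0 then of_nat (CARD('a)^d) else 0) * NC m)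
      = (\<Sum>m\<in>vecs d. if m = restrict (\<lambda>_. 0) {..<d} then of_nat (CARD('a)^d) * NC m else 0)"
  proof (intro sum.cong refl)
    fix m :: "nat \<Rightarrow> 'a" assume m: "m \<in> vecs d"
    have iff: "(\<forall>i<d. m i = 0) = (m = restrict (\<lambda>_. 0) {..<d})" by (rule zero_vec_iff[OF m])
    show "(if \<forall>i<d. m i = 0 then of_nat (CARD('a)^d) else 0) * NC m =
        (if m = restrict (\<lambda>_. 0) {..<d} then of_nat (CARD('a)^d) * NC m else 0)"
      by (cases "m = restrict (\<lambda>_. 0) {..<d}") (simp, simp only: iff if_False mult_zero_left simp_thms)
  qed
  also have "\<dots> = of_nat (CARD('a)^d) * NC (restrict (\<lambda>_. 0) {..<d})"
    using z0 by (simp only: sum.delta[OF finite_vecs] if_P)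
  also have "NC (restrict (\<lambda>_. 0) {..<d}) = of_nat (card E)^2"
    by (simp add: NC_def Ssum_zero power2_eq_square)
  finally have "(\<Sum>m\<in>vecs d. ghat d g m * NC m) = (1/?q) * (of_nat (CARD('a)^d) * of_nat (card E)^2 + (\<Sum>m\<in>vecs d. Tm d e m * NC m))" .
  with W1 have "of_nat (wcount d e E 0) =
      (1 / of_nat (CARD('a)^d)) * ((1/?q) * (of_nat (CARD('a)^d) * of_nat (card E)^2 + (\<Sum>m\<in>vecs d. Tm d e m * NC m)))"
    by simp
  also have "\<dots> = of_nat (card E)^2 / ?q + (1 / ?q^(d+1)) * (\<Sum>m\<in>vecs d. Tm d e m * NC m)"
    using q0 by (simp add: field_simps)
  finally show ?thesis by (simp add: NC_def)
qed


lemma Tm_even: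
  fixes e :: "'a::{field,finite}"
  assumes char: "CHAR('a) \<noteq> 2" and e: "e \<noteq> 0" and d: "even d" "2 \<le> d"
  shows "Tm d e m = of_int (qchar e) * of_nat CARD('a) ^ (d div 2) *
     ((if qform d (inverse e) m = 0 then of_nat CARD('a) else 0) - 1)"
proof -
  have four: "(4::'a) \<noteq> 0" by (rule four_nz[OF char])
  have "Tm d e m = (\<Sum>s\<in>UNIV-{0}. add_char (- (qform d (inverse e) m) / 4 * inverse s) * (of_int (qchar e) * of_nat CARD('a) ^ (d div 2)))"
    unfolding Tm_def by (intro sum.cong refl) (simp add: P_even[OF char _ e d])
  also have "\<dots> = (of_int (qchar e) * of_nat CARD('a) ^ (d div 2)) * (\<Sum>s\<in>UNIV-{0}. add_char (- (qform d (inverse e) m) / 4 * inverse s))"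
    by (simp add: sum_distrib_left mult.commute)
  also have "(\<Sum>s\<in>UNIV-{0}. add_char (- (qform d (inverse e) m) / 4 * inverse (s::'a))) =
      (if - (qform d (inverse e) m) / 4 = 0 then of_nat CARD('a) - 1 else -1)"
    by (rule twist_sum)
  also have "(- (qform d (inverse e) m) / 4 = 0) = (qform d (inverse e) m = 0)"
    using four by simp
  finally show ?thesis by (simp add: algebra_simps)
qed

lemma cmod_gs:
  assumes char: "CHAR('a::{field,finite}) \<noteq> 2" and a: "(a::'a) \<noteq> 0"
  shows "cmod (gs a) = sqrt (real CARD('a))"
proof -
  have "gs a * cnj (gs a) = of_nat CARD('a)" using gs_norm[OF char a] by (simp add: gs_neg)
  hence "complex_of_real ((cmod (gs a))^2) = complex_of_real (real CARD('a))"
    using complex_norm_square[of "gs a"] by (metis of_real_of_nat_eq)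
  hence "(cmod (gs a))^2 = real CARD('a)" using of_real_eq_iff by blast
  thus ?thesis by (metis norm_ge_zero real_sqrt_unique)
qed

lemma Tm_odd_bound:
  fixes e :: "'a::{field,finite}"
  assumes char: "CHAR('a) \<noteq> 2" and e: "e \<noteq> 0" and d: "odd d"
  shows "cmod (Tm d e m) \<le> real CARD('a) ^ (d div 2 + 1)"
proof -
  let ?b = "- (qform d (inverse e) m) / 4"
  have "Tm d e m = (\<Sum>s\<in>UNIV-{0}. add_char (?b * inverse s) * (of_nat CARD('a) ^ (d div 2) * (of_int (qchar e) * gs (1::'a)) * of_int (qchar s)))"
  proof (unfold Tm_def, intro sum.cong refl)
    fix s :: 'a assume "s \<in> UNIV - {0}"
    hence s: "s \<noteq> 0" by simp
    have "gs (s * e) = of_int (qchar (s * e)) * gs (1::'a)" using gs_mult[OF char, of "s * e"] s e by simp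
    also have "\<dots> = of_int (qchar e) * gs (1::'a) * of_int (qchar s)" by (simp add: qchar_mult[OF char])
    finally show "add_char (?b * inverse s) * (\<Prod>i<d. gs (s * cf d e i)) =
        add_char (?b * inverse s) * (of_nat CARD('a) ^ (d div 2) * (of_int (qchar e) * gs (1::'a)) * of_int (qchar s))"
      by (simp add: P_odd[OF char s d] mult.assoc)
  qed
  also have "\<dots> = (of_nat CARD('a) ^ (d div 2) * (of_int (qchar e) * gs (1::'a))) *
      (\<Sum>s\<in>UNIV-{0}. of_int (qchar s) * add_char (?b * inverse (s::'a)))"
    by (simp add: sum_distrib_left mult_ac)
  also have "(\<Sum>s\<in>UNIV-{0}. of_int (qchar s) * add_char (?b * inverse (s::'a))) = (if ?b = 0 then 0 else gs ?b)"
    by (rule twist_sum_eta[OF char])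
  finally have T: "Tm d e m = of_nat CARD('a) ^ (d div 2) * (of_int (qchar e) * gs (1::'a)) * (if ?b = 0 then 0 else gs ?b)" .
  have qe: "\<bar>real_of_int (qchar e)\<bar> = 1" using e by (simp add: qchar_def)
  have g1: "cmod (gs (1::'a)) = sqrt (real CARD('a))" by (rule cmod_gs[OF char]) simp
  have gb: "cmod (if ?b = 0 then 0 else gs ?b) \<le> sqrt (real CARD('a))"
    using cmod_gs[OF char, of ?b] by auto
  have "cmod (Tm d e m) = real CARD('a) ^ (d div 2) * sqrt (real CARD('a)) * cmod (if ?b = 0 then 0 else gs ?b)"
    unfolding T by (simp add: norm_mult norm_power qe g1)
  also have "\<dots> \<le> real CARD('a) ^ (d div 2) * sqrt (real CARD('a)) * sqrt (real CARD('a))"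
    by (intro mult_left_mono gb) auto
  also have "\<dots> = real CARD('a) ^ (d div 2 + 1)" by simp
  finally show ?thesis .
qed

lemma fourier_Ssum:
  fixes E :: "(nat \<Rightarrow> 'a::{field,finite}) set"
  shows "cmod (fourier d E m) = cmod (Ssum d E m) / real CARD('a) ^ d"
proof -
  have "(\<Sum>x\<in>E. add_char (- dotp d m x)) = cnj (Ssum d E m)"
    by (simp add: Ssum_def cnj_sum add_char_neg)
  hence "fourier d E m = (1 / of_nat (CARD('a) ^ d)) * cnj (Ssum d E m)"
    by (simp add: fourier_def)
  thus ?thesis by (simp add: norm_mult norm_divide norm_power)
qed

lemma key_real:
  fixes E :: "(nat \<Rightarrow> 'a::{field,finite}) set"
  assumes char: "CHAR('a) \<noteq> 2" and d: "1 \<le> d" and e: "e \<noteq> 0" and E: "E \<subseteq> vecs d"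
  shows "real CARD('a) ^ (d+1) * real (wcount d e E 0) =
      real CARD('a) ^ d * real (card E) ^ 2 + (\<Sum>m\<in>vecs d. Re (Tm d e m) * (cmod (Ssum d E m))^2)"
proof -
  let ?q = "of_nat CARD('a) :: complex"
  have q0: "?q \<noteq> 0" by simp
  have NC: "Ssum d E m * cnj (Ssum d E m) = complex_of_real ((cmod (Ssum d E m))^2)" for m
    by (simp only: complex_norm_square)
  have "of_nat (wcount d e E 0) = of_nat (card E)^2 / ?q
     + (1 / ?q^(d+1)) * (\<Sum>m\<in>vecs d. Tm d e m * complex_of_real ((cmod (Ssum d E m))^2))"
    using main_identity[OF char d e E] by (simp only: NC)
  hence "?q^(d+1) * of_nat (wcount d e E 0) = ?q^d * of_nat (card E)^2
     + (\<Sum>m\<in>vecs d. Tm d e m * complex_of_real ((cmod (Ssum d E m))^2))"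
    using q0 by (simp add: field_simps)
  hence "Re (?q^(d+1) * of_nat (wcount d e E 0)) = Re (?q^d * of_nat (card E)^2
     + (\<Sum>m\<in>vecs d. Tm d e m * complex_of_real ((cmod (Ssum d E m))^2)))"
    by simp
  thus ?thesis by (simp add: Re_sum)
qed

lemma planch_real:
  fixes E :: "(nat \<Rightarrow> 'a::{field,finite}) set"
  assumes E: "E \<subseteq> vecs d"
  shows "real CARD('a) ^ d * real (card E) = (\<Sum>m\<in>vecs d. (cmod (Ssum d E m))^2)"
proof -
  have NC: "Ssum d E m * cnj (Ssum d E m) = complex_of_real ((cmod (Ssum d E m))^2)" for m
    by (simp only: complex_norm_square)
  have "of_nat (card E) = (1 / of_nat (CARD('a) ^ d)) * (\<Sum>m\<in>vecs d. complex_of_real ((cmod (Ssum d E m))^2))"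
    using plancherel[OF E] by (simp only: NC)
  hence "complex_of_real (real CARD('a) ^ d * real (card E)) = complex_of_real (\<Sum>m\<in>vecs d. (cmod (Ssum d E m))^2)"
    by (simp add: field_simps)
  thus ?thesis using of_real_eq_iff by blast
qed


lemma cancel_pos:
  fixes Q W R :: real
  assumes "Q > 0" "Q^n * W \<le> Q^n * R"
  shows "W \<le> R"
  using assms by (simp add: mult_le_cancel_left_pos)

lemma ar1:
  fixes Q W Er A F :: real
  assumes Q: "Q > 0" and Er: "Er \<ge> 0"
    and h: "Q^(2*k+1) * W = Q^(2*k) * Er^2 + Q^k * (Q*A - Q^(2*k) * Er)"
    and A: "A = Q^(4*k) * F"
  shows "W \<le> Er^2/Q + Q^(3*k) * F"
proof (rule cancel_pos[OF Q, of "2*k+1"])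
  have "Q^k * Q^(2*k) * Er \<ge> 0" using Q Er by simp
  have p1: "Q^(2*k+1) = Q^(2*k) * Q" by (simp only: power_add power_one_right)
  have p2: "Q^(2*k+1) * Q^(3*k) = Q^(5*k+1)"
  proof -
    have "Q^(2*k+1) * Q^(3*k) = Q^(2*k+1+3*k)" by (simp only: power_add)
    also have "2*k+1+3*k = 5*k+1" by arith
    finally show ?thesis .
  qed
  have e1: "Q^(2*k+1) * (Er^2/Q + Q^(3*k) * F) = Q^(2*k) * Er^2 + Q^(5*k+1) * F"
  proof -
    have h1: "Q^(2*k+1) * (Er^2/Q) = Q^(2*k) * Er^2" using Q by (simp add: p1)
    have "Q^(2*k+1) * (Er^2/Q + Q^(3*k) * F) = Q^(2*k+1) * (Er^2/Q) + (Q^(2*k+1) * Q^(3*k)) * F"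
      by (simp only: distrib_left mult.assoc)
    also have "\<dots> = Q^(2*k) * Er^2 + Q^(5*k+1) * F" by (simp only: h1 p2)
    finally show ?thesis .
  qed
  have e2: "Q^k * (Q*A) = Q^(5*k+1) * F"
  proof -
    have "Q^k * (Q*A) = Q^(k+1+4*k) * F" by (simp only: A power_add power_one_right mult.assoc)
    also have "k+1+4*k = 5*k+1" by arith
    finally show ?thesis .
  qed
  have "Q^(2*k+1) * W = Q^(2*k) * Er^2 + Q^k * (Q*A) - Q^k * Q^(2*k) * Er"
    using h by (simp add: algebra_simps)
  also have "\<dots> \<le> Q^(2*k) * Er^2 + Q^(5*k+1) * F"
    using \<open>Q^k * Q^(2*k) * Er \<ge> 0\<close> e2 by linarith
  finally show "Q^(2*k+1) * W \<le> Q^(2*k+1) * (Er^2/Q + Q^(3*k) * F)" using e1 by simp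
qed

lemma ar2:
  fixes Q W Er A :: real
  assumes Q: "Q > 0" and A0: "A \<ge> 0" and k: "k \<ge> 1"
    and h: "Q^(2*k+1) * W = Q^(2*k) * Er^2 - Q^k * (Q*A - Q^(2*k) * Er)"
  shows "W \<le> Er^2/Q + Q^(k-1) * Er"
proof (rule cancel_pos[OF Q, of "2*k+1"])
  have e1: "Q^(2*k+1) * (Er^2/Q + Q^(k-1) * Er) = Q^(2*k) * Er^2 + Q^k * Q^(2*k) * Er"
  proof -
    have "Q^(2*k+1) * Q^(k-1) = Q^(2*k+1+(k-1))" by (simp only: power_add)
    also have "2*k+1+(k-1) = k + 2*k" using k by arith
    also have "Q^(k + 2*k) = Q^k * Q^(2*k)" by (simp only: power_add)
    finally have "Q^(2*k+1) * Q^(k-1) = Q^k * Q^(2*k)" .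
    thus ?thesis using Q by (simp add: field_simps)
  qed
  have "Q^k * (Q*A) \<ge> 0" using Q A0 by simp
  have "Q^(2*k+1) * W = Q^(2*k) * Er^2 - Q^k * (Q*A) + Q^k * Q^(2*k) * Er"
    using h by (simp add: algebra_simps)
  also have "\<dots> \<le> Q^(2*k) * Er^2 + Q^k * Q^(2*k) * Er"
    using \<open>Q^k * (Q*A) \<ge> 0\<close> by linarith
  finally show "Q^(2*k+1) * W \<le> Q^(2*k+1) * (Er^2/Q + Q^(k-1) * Er)" using e1 by simp
qed

lemma ar3:
  fixes Q W Er :: real
  assumes Q: "Q > 0"
    and h: "Q^(2*k+2) * W \<le> Q^(2*k+1) * Er^2 + Q^(k+1) * (Q^(2*k+1) * Er)"
  shows "W \<le> Er^2/Q + Q^k * Er"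
proof (rule cancel_pos[OF Q, of "2*k+2"])
  have e1: "Q^(2*k+2) * (Er^2/Q + Q^k * Er) = Q^(2*k+1) * Er^2 + Q^(k+1) * (Q^(2*k+1) * Er)"
  proof -
    have "Q^(2*k+2) * Q^k = Q^(k+1) * Q^(2*k+1)" by (simp add: power_add[symmetric])
    moreover have "Q^(2*k+2) / Q = Q^(2*k+1)" using Q by simp
    ultimately show ?thesis using Q by (simp add: distrib_left mult.assoc[symmetric])
  qed
  show "Q^(2*k+2) * W \<le> Q^(2*k+2) * (Er^2/Q + Q^k * Er)" using h e1 by simp
qed


theorem proposition5p3:
  fixes E :: "(nat \<Rightarrow> 'a::{field,finite}) set"
    and d :: nat and \<epsilon> :: 'a and A :: "'a mat"
  assumes odd_char: "CHAR('a) \<noteq> 2"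
    and d2: "d \<ge> 2"
    and E: "E \<subseteq> vecs d"
    and A: "A \<in> carrier_mat d d" "transpose_mat A = A" "det A \<noteq> 0"
    and eps0: "\<epsilon> \<noteq> 0"
    and eps_even: "even d \<Longrightarrow> qchar ((-1) ^ (d div 2) * \<epsilon>) = qchar (det A)"
    and eps_odd: "odd d \<Longrightarrow> qchar ((-1) ^ ((d - 1) div 2) * \<epsilon>) = qchar (det A)"
  shows
    "(even d \<and> qchar \<epsilon> = 1 \<longrightarrow>
        0 \<le> real (wcount d \<epsilon> E 0) \<and>
        real (wcount d \<epsilon> E 0) \<le> real (card E) ^ 2 / real CARD('a)
          + real CARD('a) powr (3 * real d / 2) * (\<Sum>m\<in>SQdual0 d \<epsilon>. (cmod (fourier d E m))\<^sup>2))
   \<and> (even d \<and> qchar \<epsilon> = -1 \<longrightarrow>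
        0 \<le> real (wcount d \<epsilon> E 0) \<and>
        real (wcount d \<epsilon> E 0) \<le> real (card E) ^ 2 / real CARD('a)
          + real CARD('a) powr ((real d - 2) / 2) * real (card E))
   \<and> (odd d \<longrightarrow>
        0 \<le> real (wcount d \<epsilon> E 0) \<and>
        real (wcount d \<epsilon> E 0) \<le> real (card E) ^ 2 / real CARD('a)
          + real CARD('a) powr ((real d - 1) / 2) * real (card E))"
proof -
  have d1: "1 \<le> d" using d2 by simp
  define Q where "Q = real CARD('a)"
  define W where "W = real (wcount d \<epsilon> E 0)"
  define Er where "Er = real (card E)"
  define N where "N m = (cmod (Ssum d E m))^2" for m
  have Q: "Q > 0" by (simp add: Q_def)
  have N0: "N m \<ge> 0" for m by (simp add: N_def)
  have key: "Q^(d+1) * W = Q^d * Er^2 + (\<Sum>m\<in>vecs d. Re (Tm d \<epsilon> m) * N m)"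
    unfolding Q_def W_def Er_def N_def by (rule key_real[OF odd_char d1 eps0 E])
  have planch: "Q^d * Er = (\<Sum>m\<in>vecs d. N m)"
    unfolding Q_def Er_def N_def by (rule planch_real[OF E])
  have W0: "0 \<le> W" by (simp add: W_def)
  have even_part: "W \<le> Er^2/Q + (if qchar \<epsilon> = 1 then Q powr (3 * real d / 2) * (\<Sum>m\<in>SQdual0 d \<epsilon>. (cmod (fourier d E m))\<^sup>2)
       else Q powr ((real d - 2) / 2) * Er)"
    if ev: "even d" and nu: "qchar \<epsilon> = 1 \<or> qchar \<epsilon> = -1"
  proof -
    obtain j where j: "d = 2*j" using ev by (rule evenE)
    define k where "k = j"
    have k1: "k \<ge> 1" using d2 j k_def by simp
    have dk: "d div 2 = k" using j k_def by simp
    define \<nu> where "\<nu> = real_of_int (qchar \<epsilon>)"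
    define F where "F = (\<Sum>m\<in>SQdual0 d \<epsilon>. (cmod (fourier d E m))\<^sup>2)"
    define AA where "AA = (\<Sum>m\<in>SQdual0 d \<epsilon>. N m)"
    have ReT: "Re (Tm d \<epsilon> m) = \<nu> * Q^k * ((if qform d (inverse \<epsilon>) m = 0 then Q else 0) - 1)" for m
      using Tm_even[OF odd_char eps0 ev d2, of m] by (simp add: \<nu>_def Q_def dk)
    have sumA: "(\<Sum>m\<in>vecs d. (if qform d (inverse \<epsilon>) m = 0 then N m else 0)) = AA"
      unfolding AA_def SQdual0_def normQdual_def by (rule sum.inter_filter[symmetric]) simp
    have S: "(\<Sum>m\<in>vecs d. Re (Tm d \<epsilon> m) * N m) = \<nu> * Q^k * (Q * AA - Q^d * Er)"
    proof -
      have "(\<Sum>m\<in>vecs d. Re (Tm d \<epsilon> m) * N m) =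
          (\<Sum>m\<in>vecs d. \<nu> * Q^k * (Q * (if qform d (inverse \<epsilon>) m = 0 then N m else 0) - N m))"
        by (intro sum.cong refl) (simp add: ReT algebra_simps)
      also have "\<dots> = \<nu> * Q^k * (Q * (\<Sum>m\<in>vecs d. (if qform d (inverse \<epsilon>) m = 0 then N m else 0)) - (\<Sum>m\<in>vecs d. N m))"
        by (simp only: sum_distrib_left[symmetric] sum_subtractf)
      finally show ?thesis by (simp add: sumA planch)
    qed
    have AF: "AA = Q^(4*k) * F"
    proof -
      have "N m = Q^(4*k) * (cmod (fourier d E m))\<^sup>2" for m
      proof -
        have "cmod (fourier d E m) = cmod (Ssum d E m) / Q^d" by (simp add: fourier_Ssum Q_def)
        hence "cmod (Ssum d E m) = Q^d * cmod (fourier d E m)" using Q by (simp add: field_simps)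
        hence "N m = (Q^d)^2 * (cmod (fourier d E m))\<^sup>2" by (simp add: N_def power_mult_distrib)
        also have "(Q^d)^2 = Q^(4*k)" by (simp add: j k_def power_mult[symmetric] mult_ac)
        finally show ?thesis .
      qed
      thus ?thesis by (simp add: AA_def F_def sum_distrib_left)
    qed
    have AA0: "AA \<ge> 0" by (simp add: AA_def N0 sum_nonneg)
    have keyk: "Q^(2*k+1) * W = Q^(2*k) * Er^2 + \<nu> * (Q^k * (Q * AA - Q^(2*k) * Er))"
      using key S j k_def by simp
    show ?thesis
    proof (cases "qchar \<epsilon> = 1")
      case True
      hence "\<nu> = 1" by (simp add: \<nu>_def)
      hence "W \<le> Er^2/Q + Q^(3*k) * F" using ar1[OF Q _ _ AF] keyk by (simp add: Er_def)
      moreover have "Q powr (3 * real d / 2) = Q^(3*k)"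
        using Q by (simp add: j k_def powr_realpow[symmetric])
      ultimately show ?thesis using True by (simp add: F_def)
    next
      case False
      hence "\<nu> = -1" using nu by (simp add: \<nu>_def)
      hence "W \<le> Er^2/Q + Q^(k-1) * Er" using ar2[OF Q AA0 k1] keyk by simp
      moreover have "Q powr ((real d - 2) / 2) = Q^(k-1)"
      proof -
        have "(real d - 2) / 2 = real (k-1)" using j k_def k1 by (simp add: of_nat_diff)
        thus ?thesis using Q by (simp add: powr_realpow)
      qed
      ultimately show ?thesis using False by simp
    qed
  qed
  have odd_part: "W \<le> Er^2/Q + Q powr ((real d - 1) / 2) * Er" if od: "odd d"
  proof -
    obtain k where k: "d = 2*k+1" using od oddE by blast
    have dk: "d div 2 = k" using k by simp
    have "(\<Sum>m\<in>vecs d. Re (Tm d \<epsilon> m) * N m) \<le> (\<Sum>m\<in>vecs d. Q^(k+1) * N m)"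
    proof (rule sum_mono)
      fix m
      have "Re (Tm d \<epsilon> m) \<le> cmod (Tm d \<epsilon> m)" by (rule complex_Re_le_cmod)
      also have "\<dots> \<le> Q^(k+1)" using Tm_odd_bound[OF odd_char eps0 od, of m] by (simp add: Q_def dk)
      finally show "Re (Tm d \<epsilon> m) * N m \<le> Q^(k+1) * N m" by (rule mult_right_mono) (rule N0)
    qed
    also have "\<dots> = Q^(k+1) * (Q^d * Er)" by (simp only: sum_distrib_left[symmetric] planch)
    finally have "Q^(2*k+2) * W \<le> Q^(2*k+1) * Er^2 + Q^(k+1) * (Q^(2*k+1) * Er)"
      using key k by simp
    hence "W \<le> Er^2/Q + Q^k * Er" by (rule ar3[OF Q])
    moreover have "Q powr ((real d - 1) / 2) = Q^k"
    proof -
      have "(real d - 1) / 2 = real k" using k by simp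
      thus ?thesis using Q by (simp add: powr_realpow)
    qed
    ultimately show ?thesis by simp
  qed
  show ?thesis
  proof (intro conjI impI)
    assume h: "even d \<and> qchar \<epsilon> = 1"
    show "0 \<le> real (wcount d \<epsilon> E 0)" by simp
    show "real (wcount d \<epsilon> E 0) \<le> real (card E) ^ 2 / real CARD('a)
          + real CARD('a) powr (3 * real d / 2) * (\<Sum>m\<in>SQdual0 d \<epsilon>. (cmod (fourier d E m))\<^sup>2)"
      using even_part h by (simp add: W_def Er_def Q_def)
  next
    assume h: "even d \<and> qchar \<epsilon> = -1"
    show "0 \<le> real (wcount d \<epsilon> E 0)" by simp
    show "real (wcount d \<epsilon> E 0) \<le> real (card E) ^ 2 / real CARD('a)
          + real CARD('a) powr ((real d - 2) / 2) * real (card E)"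
      using even_part h by (simp add: W_def Er_def Q_def)
  next
    assume h: "odd d"
    show "0 \<le> real (wcount d \<epsilon> E 0)" by simp
    show "real (wcount d \<epsilon> E 0) \<le> real (card E) ^ 2 / real CARD('a)
          + real CARD('a) powr ((real d - 1) / 2) * real (card E)"
      using odd_part h by (simp add: W_def Er_def Q_def)
  qed
qed

end
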